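(* Let $\mathfrak{A}$ be a unital $\mathrm{C}^*$-algebra, let $\mathfrak{S}\subset\mathfrak{A}$ be an operator system and let $\psi$ be a state on $\mathfrak{A}$. The following are equivalent: (i) $\psi$ is $\mathfrak{S}$-peaking; (ii) $\psi$ has the unique extension property with respect to $\mathfrak{S}$, and the restriction $\psi|_{\mathfrak{S}}$ is a weak-$*$ exposed point of the set $Q$ of self-adjoint linear functionals on $\mathfrak{S}$ of norm at most $1$.
   Context: An operator system $\mathfrak{S}\subset\mathfrak{A}$ is a unital self-adjoint subspace. A state $\psi$ on $\mathfrak{A}$ is $\mathfrak{S}$-peaking if there is a self-adjoint $s\in\mathfrak{S}$ with $\|s\|=1$ such that $\psi(s)=1>|\phi(s)|$ for every state $\phi$ on $\mathfrak{A}$ with $\phi\neq\psi$. A state $\psi$ on $\mathfrak{A}$ has the unique extension property with respect to $\mathfrak{S}$ if it is the unique unital completely positive map on $\mathfrak{A}$ extending $\psi|_{\mathfrak{S}}$. For a normed space $X$ and a weak-$*$ closed convex set $Q$ in the closed unit ball of $X^*$ containing $0$, a nonzero $\Lambda_0\in Q$ is a weak-$*$ exposed point of $Q$ if there is $x_0\in X$ with $\operatorname{Re}\Lambda_0(x_0)=1>\operatorname{Re}\Lambda(x_0)$ for all $\Lambda\in Q$ with $\Lambda\neq\Lambda_0$. A functional $\Lambda$ on $\mathfrak{S}$ is self-adjoint if $\Lambda(s^* )=\overline{\Lambda(s)}$ for all $s\in\mathfrak{S}$. *)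

theory Defs
  imports "HOL-Analysis.Analysis"
begin

text \<open>A unital C*-algebra: a unital real Banach algebra (type class) equipped with a
complex scalar multiplication compatible with the real one, and an involution satisfying
the C*-identity.\<close>

locale unital_cstar_algebra =
  fixes scal :: "complex \<Rightarrow> 'a::{real_normed_algebra_1, banach} \<Rightarrow> 'a"
    and star :: "'a \<Rightarrow> 'a"
  assumes scal_of_real: "\<And>r x. scal (complex_of_real r) x = scaleR r x"
    and scal_add_left: "\<And>a b x. scal (a + b) x = scal a x + scal b x"
    and scal_add_right: "\<And>a x y. scal a (x + y) = scal a x + scal a y"
    and scal_scal: "\<And>a b x. scal a (scal b x) = scal (a * b) x"
    and norm_scal: "\<And>a x. norm (scal a x) = cmod a * norm x"
    and scal_mult_left: "\<And>a x y. scal a (x * y) = scal a x * y"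
    and scal_mult_right: "\<And>a x y. scal a (x * y) = x * scal a y"
    and star_add: "\<And>x y. star (x + y) = star x + star y"
    and star_scal: "\<And>a x. star (scal a x) = scal (cnj a) (star x)"
    and star_star: "\<And>x. star (star x) = x"
    and star_mult: "\<And>x y. star (x * y) = star y * star x"
    and cstar_identity: "\<And>x. norm (star x * x) = (norm x)\<^sup>2"

definition operator_system ::
  "(complex \<Rightarrow> 'a::{real_normed_algebra_1} \<Rightarrow> 'a) \<Rightarrow> ('a \<Rightarrow> 'a) \<Rightarrow> 'a set \<Rightarrow> bool" where
  "operator_system scal star S \<longleftrightarrow>
     0 \<in> S \<and> 1 \<in> S \<and>
     (\<forall>x\<in>S. \<forall>y\<in>S. x + y \<in> S) \<and>
     (\<forall>c. \<forall>x\<in>S. scal c x \<in> S) \<and>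
     (\<forall>x\<in>S. star x \<in> S)"

definition clinear_functional ::
  "(complex \<Rightarrow> 'a::{real_normed_algebra_1} \<Rightarrow> 'a) \<Rightarrow> ('a \<Rightarrow> complex) \<Rightarrow> bool" where
  "clinear_functional scal \<phi> \<longleftrightarrow>
     (\<forall>x y. \<phi> (x + y) = \<phi> x + \<phi> y) \<and> (\<forall>c x. \<phi> (scal c x) = c * \<phi> x)"

definition is_state ::
  "(complex \<Rightarrow> 'a::{real_normed_algebra_1} \<Rightarrow> 'a) \<Rightarrow> ('a \<Rightarrow> 'a) \<Rightarrow> ('a \<Rightarrow> complex) \<Rightarrow> bool" where
  "is_state scal star \<phi> \<longleftrightarrow>
     clinear_functional scal \<phi> \<and> \<phi> 1 = 1 \<and>
     (\<forall>x. Im (\<phi> (star x * x)) = 0 \<and> Re (\<phi> (star x * x)) \<ge> 0)"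

definition pos_matrix_alg ::
  "('a::{real_normed_algebra_1} \<Rightarrow> 'a) \<Rightarrow> nat \<Rightarrow> (nat \<Rightarrow> nat \<Rightarrow> 'a) \<Rightarrow> bool" where
  "pos_matrix_alg star n a \<longleftrightarrow>
     (\<exists>b :: nat \<Rightarrow> nat \<Rightarrow> 'a. \<forall>i<n. \<forall>j<n. a i j = (\<Sum>k<n. star (b k i) * b k j))"

definition psd_complex_matrix :: "nat \<Rightarrow> (nat \<Rightarrow> nat \<Rightarrow> complex) \<Rightarrow> bool" where
  "psd_complex_matrix n m \<longleftrightarrow>
     (\<forall>v :: nat \<Rightarrow> complex.
        let q = (\<Sum>i<n. \<Sum>j<n. cnj (v i) * m i j * v j) in Im q = 0 \<and> Re q \<ge> 0)"

definition ucp_functional ::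
  "(complex \<Rightarrow> 'a::{real_normed_algebra_1} \<Rightarrow> 'a) \<Rightarrow> ('a \<Rightarrow> 'a) \<Rightarrow> ('a \<Rightarrow> complex) \<Rightarrow> bool" where
  "ucp_functional scal star \<phi> \<longleftrightarrow>
     clinear_functional scal \<phi> \<and> \<phi> 1 = 1 \<and>
     (\<forall>n a. pos_matrix_alg star n a \<longrightarrow> psd_complex_matrix n (\<lambda>i j. \<phi> (a i j)))"

definition S_peaking ::
  "(complex \<Rightarrow> 'a::{real_normed_algebra_1} \<Rightarrow> 'a) \<Rightarrow> ('a \<Rightarrow> 'a) \<Rightarrow> 'a set \<Rightarrow> ('a \<Rightarrow> complex) \<Rightarrow> bool" where
  "S_peaking scal star S \<psi> \<longleftrightarrow>
     (\<exists>s\<in>S. star s = s \<and> norm s = 1 \<and> \<psi> s = 1 \<and>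
        (\<forall>\<phi>. is_state scal star \<phi> \<and> \<phi> \<noteq> \<psi> \<longrightarrow> cmod (\<phi> s) < 1))"

definition unique_extension_property ::
  "(complex \<Rightarrow> 'a::{real_normed_algebra_1} \<Rightarrow> 'a) \<Rightarrow> ('a \<Rightarrow> 'a) \<Rightarrow> 'a set \<Rightarrow> ('a \<Rightarrow> complex) \<Rightarrow> bool" where
  "unique_extension_property scal star S \<psi> \<longleftrightarrow>
     (\<forall>\<phi>. ucp_functional scal star \<phi> \<and> (\<forall>s\<in>S. \<phi> s = \<psi> s) \<longrightarrow> \<phi> = \<psi>)"

text \<open>Functionals on S are represented as functions on the whole type that vanish off S
(so equality of such functions is equality on S). The restriction of psi to S: \<close>
definition restrict_fun :: "'a set \<Rightarrow> ('a \<Rightarrow> complex) \<Rightarrow> 'a \<Rightarrow> complex" where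
  "restrict_fun S \<psi> = (\<lambda>x. if x \<in> S then \<psi> x else 0)"

definition sa_unit_ball_dual ::
  "(complex \<Rightarrow> 'a::{real_normed_algebra_1} \<Rightarrow> 'a) \<Rightarrow> ('a \<Rightarrow> 'a) \<Rightarrow> 'a set \<Rightarrow> ('a \<Rightarrow> complex) set" where
  "sa_unit_ball_dual scal star S =
     {\<Lambda>. (\<forall>x. x \<notin> S \<longrightarrow> \<Lambda> x = 0) \<and>
          (\<forall>x\<in>S. \<forall>y\<in>S. \<Lambda> (x + y) = \<Lambda> x + \<Lambda> y) \<and>
          (\<forall>c. \<forall>x\<in>S. \<Lambda> (scal c x) = c * \<Lambda> x) \<and>
          (\<forall>x\<in>S. \<Lambda> (star x) = cnj (\<Lambda> x)) \<and>
          (\<forall>x\<in>S. cmod (\<Lambda> x) \<le> norm x)}"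

definition weak_star_exposed ::
  "'a set \<Rightarrow> ('a \<Rightarrow> complex) set \<Rightarrow> ('a \<Rightarrow> complex) \<Rightarrow> bool" where
  "weak_star_exposed S Q \<Lambda>0 \<longleftrightarrow>
     \<Lambda>0 \<in> Q \<and> \<Lambda>0 \<noteq> (\<lambda>_. 0) \<and>
     (\<exists>x0\<in>S. Re (\<Lambda>0 x0) = 1 \<and> (\<forall>\<Lambda>\<in>Q. \<Lambda> \<noteq> \<Lambda>0 \<longrightarrow> Re (\<Lambda> x0) < 1))"

end

theory Submission
  imports Defs "HOL-Complex_Analysis.Complex_Analysis" "HOL-Computational_Algebra.Fundamental_Theorem_Algebra"
begin

context unital_cstar_algebra
begin

lemma scal_zero_left[simp]: "scal 0 x = 0"
  using scal_of_real[of 0 x] by simp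

lemma scal_one[simp]: "scal 1 x = x"
  using scal_of_real[of 1 x] by simp

lemma scal_zero_right[simp]: "scal c 0 = 0"
  using scal_add_right[of c 0 0] by simp

lemma scal_minus_right: "scal c (- x) = - scal c x"
  using scal_add_right[of c x "-x"] by (simp add: minus_unique)

lemma scal_minus_left: "scal (- c) x = - scal c x"
  using scal_add_left[of c "-c" x] by (simp add: minus_unique)

lemma scal_diff_right: "scal c (x - y) = scal c x - scal c y"
  using scal_add_right[of c x "-y"] by (simp add: scal_minus_right)

lemma scal_diff_left: "scal (a - b) x = scal a x - scal b x"
  using scal_add_left[of a "-b" x] by (simp add: scal_minus_left)

lemma scal_real: "scal (complex_of_real r) x = r *\<^sub>R x"
  by (rule scal_of_real)

lemma scal_sum_right: "scal c (sum f A) = (\<Sum>i\<in>A. scal c (f i))"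
  by (induction A rule: infinite_finite_induct) (auto simp: scal_add_right)

lemma scal_sum_left: "scal (sum f A) x = (\<Sum>i\<in>A. scal (f i) x)"
  by (induction A rule: infinite_finite_induct) (auto simp: scal_add_left)

lemma scal_one_mult: "scal c 1 * x = scal c x"
  using scal_mult_left[of c 1 x] by simp

lemma scal_one_mult': "x * scal c 1 = scal c x"
  using scal_mult_right[of c x 1] by simp

lemma scal_scal_comm: "scal a (scal b x) = scal b (scal a x)"
  by (simp add: scal_scal mult.commute)

lemma star_zero[simp]: "star 0 = 0"
  using star_add[of 0 0] by simp

lemma star_minus: "star (- x) = - star x"
  using star_add[of x "-x"] by (simp add: minus_unique)

lemma star_diff: "star (x - y) = star x - star y"
  using star_add[of x "-y"] by (simp add: star_minus)

lemma star_one[simp]: "star 1 = 1"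
proof -
  have "star 1 = star 1 * star (star 1)" by (metis star_star mult_1_right)
  also have "\<dots> = star (star 1 * 1)" by (rule star_mult[symmetric])
  also have "\<dots> = 1" by (simp add: star_star)
  finally show ?thesis .
qed

lemma star_scaleR: "star (r *\<^sub>R x) = r *\<^sub>R star x"
  using star_scal[of "complex_of_real r" x] by (simp add: scal_real)

lemma star_sum: "star (sum f A) = (\<Sum>i\<in>A. star (f i))"
  by (induction A rule: infinite_finite_induct) (auto simp: star_add)

lemma star_power: "star (x ^ n) = star x ^ n"
proof (induction n)
  case (Suc n)
  have "star (x ^ Suc n) = star (x * x ^ n)" by simp
  also have "\<dots> = star (x^n) * star x" by (simp add: star_mult)
  also have "\<dots> = star x ^ n * star x" using Suc by simp
  also have "\<dots> = star x ^ Suc n" by (simp add: power_commutes)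
  finally show ?case .
qed simp

lemma star_scal1: "star (scal c 1) = scal (cnj c) 1"
  by (simp add: star_scal)

lemma norm_star_le: "norm x \<le> norm (star x)"
proof (cases "x = 0")
  case False
  have "(norm x)^2 = norm (star x * x)" by (simp add: cstar_identity)
  also have "\<dots> \<le> norm (star x) * norm x" by (rule norm_mult_ineq)
  finally have "norm x * norm x \<le> norm (star x) * norm x" by (simp add: power2_eq_square)
  with False show ?thesis by simp
qed simp

lemma norm_star[simp]: "norm (star x) = norm x"
  using norm_star_le[of x] norm_star_le[of "star x"] by (simp add: star_star)

lemma star_eq_zero_iff[simp]: "star x = 0 \<longleftrightarrow> x = 0"
  using norm_star[of x] by (metis norm_eq_zero)

lemma bounded_linear_star: "bounded_linear star"
  by (rule bounded_linear_intro[where K=1]) (auto simp: star_add star_scaleR)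

lemma norm_sa_square: "star h = h \<Longrightarrow> norm (h * h) = (norm h)^2"
  using cstar_identity[of h] by simp

lemma norm_sa_pow2: "star h = h \<Longrightarrow> norm (h ^ (2^m)) = (norm h) ^ (2^m)"
proof (induction m)
  case (Suc m)
  have sa: "star (h^(2^m)) = h^(2^m)" using Suc.prems by (simp add: star_power)
  have "h ^ (2 ^ Suc m) = h^(2^m) * h^(2^m)" by (simp add: power_add[symmetric] mult_2)
  hence "norm (h ^ (2 ^ Suc m)) = (norm (h^(2^m)))^2" using norm_sa_square[OF sa] by simp
  also have "\<dots> = (norm h)^(2^Suc m)" using Suc by (simp add: power_mult[symmetric] mult.commute)
  finally show ?case .
qed simp

end


definition isinv :: "'a::real_normed_algebra_1 \<Rightarrow> bool" where
  "isinv x \<longleftrightarrow> (\<exists>y. x * y = 1 \<and> y * x = 1)"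

definition ainv :: "'a::real_normed_algebra_1 \<Rightarrow> 'a" where
  "ainv x = (THE y. x * y = 1 \<and> y * x = 1)"

lemma inv_unique:
  fixes x :: "'a::real_normed_algebra_1"
  assumes "x * y = 1" "y' * x = 1" shows "y' = y"
proof -
  have "y' = y' * (x * y)" using assms by simp
  also have "\<dots> = (y' * x) * y" by (simp add: mult.assoc)
  finally show ?thesis using assms by simp
qed

lemma ainv_eq:
  fixes x :: "'a::real_normed_algebra_1"
  assumes "x * y = 1" "y * x = 1" shows "ainv x = y"
  unfolding ainv_def
  by (rule the_equality) (use assms inv_unique in auto)

lemma isinvI: "x * y = 1 \<Longrightarrow> y * x = 1 \<Longrightarrow> isinv x"
  unfolding isinv_def by blast

lemma ainv_right: "isinv x \<Longrightarrow> x * ainv x = 1"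
  unfolding isinv_def using ainv_eq by metis

lemma ainv_left: "isinv x \<Longrightarrow> ainv x * x = 1"
  unfolding isinv_def using ainv_eq by metis

lemma isinv_ainv: "isinv x \<Longrightarrow> isinv (ainv x)"
  using ainv_left ainv_right isinvI by metis

lemma isinv_one[simp]: "isinv (1::'a::real_normed_algebra_1)"
  by (rule isinvI[of _ 1]) simp_all

lemma isinv_mult: "isinv a \<Longrightarrow> isinv b \<Longrightarrow> isinv (a * b)"
proof -
  assume a: "isinv a" and b: "isinv b"
  have "(a * b) * (ainv b * ainv a) = a * (b * ainv b) * ainv a" by (simp add: mult.assoc)
  also have "\<dots> = 1" using a b by (simp add: ainv_right)
  finally have 1: "(a * b) * (ainv b * ainv a) = 1" .
  have "(ainv b * ainv a) * (a * b) = ainv b * (ainv a * a) * b" by (simp add: mult.assoc)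
  also have "\<dots> = 1" using a b by (simp add: ainv_left)
  finally show ?thesis using 1 isinvI by metis
qed

lemma isinv_commute_factor:
  fixes a b :: "'a::real_normed_algebra_1"
  assumes "a * b = b * a" "isinv (a * b)" shows "isinv a"
proof -
  define m where "m = ainv (a * b)"
  have r: "a * (b * m) = 1" using assms(2) ainv_right unfolding m_def by (metis mult.assoc)
  have l: "(m * b) * a = 1" using assms ainv_left unfolding m_def by (metis mult.assoc)
  have "m * b = b * m" using inv_unique[OF r l] .
  thus ?thesis using r l isinvI by metis
qed

lemma isinv_commute_factor2:
  fixes a b :: "'a::real_normed_algebra_1"
  assumes "a * b = b * a" "isinv (a * b)" shows "isinv b"
  using isinv_commute_factor[of b a] assms by simp

lemma isinv_minus: "isinv x \<Longrightarrow> isinv (- x)"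
  unfolding isinv_def by (metis minus_mult_minus)

lemma neumann:
  fixes x :: "'a::{real_normed_algebra_1,banach}"
  assumes "norm x < 1"
  shows "isinv (1 - x)"
proof -
  have sn: "summable (\<lambda>n. norm x ^ n)" using assms by (simp add: summable_geometric)
  have s: "summable (\<lambda>n. x ^ n)"
    by (rule summable_comparison_test[OF _ sn]) (auto intro!: exI[of _ 0] norm_power_ineq)
  define s where "s = suminf (\<lambda>n. x ^ n)"
  have z: "(\<lambda>n. x ^ n) \<longlonglongrightarrow> 0"
    using summable_LIMSEQ_zero[OF s] .
  have ps: "(\<lambda>N. \<Sum>n<N. x ^ n) \<longlonglongrightarrow> s" using s unfolding s_def
    by (simp add: summable_LIMSEQ)
  have tel1: "(1 - x) * (\<Sum>n<N. x ^ n) = 1 - x ^ N" for N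
  proof (induction N)
    case (Suc N)
    have "(1 - x) * (\<Sum>n<Suc N. x ^ n) = (1 - x) * (\<Sum>n<N. x ^ n) + (1 - x) * x ^ N"
      by (simp add: distrib_left)
    also have "\<dots> = 1 - x ^ N + (x ^ N - x ^ Suc N)" using Suc by (simp add: left_diff_distrib)
    finally show ?case by simp
  qed simp
  have tel2: "(\<Sum>n<N. x ^ n) * (1 - x) = 1 - x ^ N" for N
  proof -
    have c: "(\<Sum>n<N. x ^ n) * x = x * (\<Sum>n<N. x ^ n)"
      by (simp add: sum_distrib_left sum_distrib_right power_commutes)
    have "(\<Sum>n<N. x ^ n) * (1 - x) = (1 - x) * (\<Sum>n<N. x ^ n)"
      by (simp add: right_diff_distrib left_diff_distrib c)
    thus ?thesis using tel1 by simp
  qed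
  have "(\<lambda>N. (1 - x) * (\<Sum>n<N. x ^ n)) \<longlonglongrightarrow> (1 - x) * s"
    by (intro tendsto_mult tendsto_const ps)
  moreover have "(\<lambda>N. (1 - x) * (\<Sum>n<N. x ^ n)) \<longlonglongrightarrow> 1"
    unfolding tel1 using tendsto_diff[OF tendsto_const[of 1] z] by simp
  ultimately have 1: "(1 - x) * s = 1" using LIMSEQ_unique by blast
  have "(\<lambda>N. (\<Sum>n<N. x ^ n) * (1 - x)) \<longlonglongrightarrow> s * (1 - x)"
    by (intro tendsto_mult tendsto_const ps)
  moreover have "(\<lambda>N. (\<Sum>n<N. x ^ n) * (1 - x)) \<longlonglongrightarrow> 1"
    unfolding tel2 using tendsto_diff[OF tendsto_const[of 1] z] by simp
  ultimately have 2: "s * (1 - x) = 1" using LIMSEQ_unique by blast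
  show ?thesis using 1 2 isinvI by metis
qed

lemma neumann_bounds:
  fixes x :: "'a::{real_normed_algebra_1,banach}"
  assumes "norm x < 1"
  shows "norm (ainv (1 - x)) \<le> 1 / (1 - norm x)"
    and "norm (ainv (1 - x) - 1) \<le> norm x / (1 - norm x)"
proof -
  define s where "s = ainv (1 - x)"
  have inv: "isinv (1 - x)" using neumann[OF assms] .
  have "(1 - x) * s = 1" using ainv_right[OF inv] unfolding s_def .
  hence eq: "s = 1 + x * s" by (simp add: algebra_simps)
  have "norm s \<le> 1 + norm x * norm s"
    using norm_triangle_ineq[of 1 "x * s"] norm_mult_ineq[of x s] eq by simp
  hence "norm s * (1 - norm x) \<le> 1" by (simp add: algebra_simps)
  thus ns: "norm s \<le> 1 / (1 - norm x)" using assms by (simp add: field_simps)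
  have "norm (s - 1) = norm (x * s)" using eq by (metis add_diff_cancel_left')
  also have "\<dots> \<le> norm x * norm s" by (rule norm_mult_ineq)
  also have "\<dots> \<le> norm x * (1 / (1 - norm x))" by (intro mult_left_mono ns) simp
  finally show "norm (s - 1) \<le> norm x / (1 - norm x)" by simp
qed

lemma perturb:
  fixes a d :: "'a::{real_normed_algebra_1,banach}"
  assumes a: "isinv a" and small: "norm (ainv a) * norm d < 1"
  shows "isinv (a - d)"
    and "norm (ainv (a - d) - ainv a) \<le> norm (ainv a) * (norm (ainv a) * norm d) / (1 - norm (ainv a) * norm d)"
proof -
  define b where "b = ainv a"
  have ab: "a * b = 1" "b * a = 1" using a by (simp_all add: b_def ainv_right ainv_left)
  have nbd: "norm (b * d) \<le> norm b * norm d" by (rule norm_mult_ineq)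
  hence sm: "norm (b * d) < 1" using small b_def by simp
  have inv1: "isinv (1 - b * d)" using neumann[OF sm] .
  define u where "u = ainv (1 - b * d)"
  have eqa: "a - d = a * (1 - b * d)" using ab by (simp add: algebra_simps mult.assoc[symmetric])
  have i1: "(a - d) * (u * b) = 1"
  proof -
    have "(a - d) * (u * b) = a * ((1 - b * d) * u) * b" unfolding eqa by (simp add: mult.assoc)
    also have "\<dots> = 1" using ainv_right[OF inv1] ab unfolding u_def by simp
    finally show ?thesis .
  qed
  have i2: "(u * b) * (a - d) = 1"
  proof -
    have "(u * b) * (a - d) = u * (b * a) * (1 - b * d)" unfolding eqa by (simp add: mult.assoc)
    also have "\<dots> = 1" using ainv_left[OF inv1] ab unfolding u_def by simp
    finally show ?thesis .
  qed
  show "isinv (a - d)" using i1 i2 isinvI by metis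
  have ai: "ainv (a - d) = u * b" using ainv_eq[OF i1 i2] .
  have "norm (ainv (a - d) - b) = norm ((u - 1) * b)" unfolding ai by (simp add: algebra_simps)
  also have "\<dots> \<le> norm (u - 1) * norm b" by (rule norm_mult_ineq)
  also have "\<dots> \<le> (norm (b * d) / (1 - norm (b * d))) * norm b"
    by (intro mult_right_mono neumann_bounds(2)[OF sm, folded u_def]) simp
  also have "\<dots> \<le> ((norm b * norm d) / (1 - norm b * norm d)) * norm b"
  proof (intro mult_right_mono)
    show "norm (b * d) / (1 - norm (b * d)) \<le> norm b * norm d / (1 - norm b * norm d)"
      using nbd sm small b_def by (intro frac_le) (auto simp: algebra_simps)
  qed simp
  finally show "norm (ainv (a - d) - ainv a) \<le> norm (ainv a) * (norm (ainv a) * norm d) / (1 - norm (ainv a) * norm d)"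
    by (simp add: b_def mult.commute)
qed

lemma open_isinv: "open {x :: 'a::{real_normed_algebra_1,banach}. isinv x}"
proof (rule openI)
  fix a :: 'a assume "a \<in> {x. isinv x}"
  hence a: "isinv a" by simp
  define e where "e = 1 / (norm (ainv a) + 1)"
  have "0 < norm (ainv a) + 1" using norm_ge_zero[of "ainv a"] by linarith
  hence e: "e > 0" unfolding e_def by simp
  have "ball a e \<subseteq> {x. isinv x}"
  proof
    fix x assume "x \<in> ball a e"
    hence nd: "norm (a - x) < e" by (simp add: dist_norm)
    have "norm (ainv a) * norm (a - x) \<le> norm (ainv a) * e" using nd by (intro mult_left_mono) auto
    also have "\<dots> < 1" unfolding e_def
    proof -
      have p: "0 < norm (ainv a) + 1" using norm_ge_zero[of "ainv a"] by linarith
      have "norm (ainv a) < norm (ainv a) + 1" by simp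
      hence "norm (ainv a) / (norm (ainv a) + 1) < 1" using p by (simp only: divide_less_eq_1_pos)
      thus "norm (ainv a) * (1 / (norm (ainv a) + 1)) < 1" by simp
    qed
    finally have "isinv (a - (a - x))" by (intro perturb(1)[OF a])
    thus "x \<in> {x. isinv x}" by simp
  qed
  thus "\<exists>e>0. ball a e \<subseteq> {x. isinv x}" using e by blast
qed

lemma isCont_ainv:
  fixes a :: "'a::{real_normed_algebra_1,banach}"
  assumes a: "isinv a"
  shows "isCont ainv a"
proof -
  define B where "B = norm (ainv a) + 1"
  have B: "B > 0" "norm (ainv a) \<le> B" unfolding B_def using norm_ge_zero[of "ainv a"] by linarith+
  show ?thesis unfolding isCont_def
  proof (rule LIM_I)
    fix r :: real assume r: "r > 0"
    define s where "s = min (1 / (2 * B)) (r / (2 * B * B))"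
    have s: "s > 0" using r B by (simp add: s_def)
    show "\<exists>s>0. \<forall>x. x \<noteq> a \<and> norm (x - a) < s \<longrightarrow> norm (ainv x - ainv a) < r"
    proof (intro exI[of _ s] conjI allI impI s)
      fix x assume "x \<noteq> a \<and> norm (x - a) < s"
      hence xs: "norm (a - x) < s" by (simp add: norm_minus_commute)
      define d where "d = a - x"
      have nd: "norm d < s" using xs d_def by simp
      have "norm (ainv a) * norm d \<le> B * norm d" using B by (intro mult_right_mono) auto
      also have "\<dots> \<le> B * s" using nd B by (intro mult_left_mono) auto
      also have "\<dots> \<le> B * (1 / (2 * B))" using B unfolding s_def by (intro mult_left_mono) auto
      also have "\<dots> = 1/2" using B by simp
      finally have h: "norm (ainv a) * norm d \<le> 1/2" .
      have "norm (ainv (a - d) - ainv a) \<le> norm (ainv a) * (norm (ainv a) * norm d) / (1 - norm (ainv a) * norm d)"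
        using perturb(2)[OF a] h by simp
      also have "\<dots> \<le> norm (ainv a) * (norm (ainv a) * norm d) / (1/2)"
        using h by (intro divide_left_mono) (auto intro!: mult_nonneg_nonneg)
      also have "\<dots> \<le> B * (B * norm d) / (1/2)"
        using B by (intro divide_right_mono mult_mono) (auto intro!: mult_right_mono)
      also have "\<dots> = 2 * B * B * norm d" by simp
      also have "\<dots> < 2 * B * B * s" using nd B by simp
      also have "\<dots> \<le> 2 * B * B * (r / (2 * B * B))" using B unfolding s_def by (intro mult_left_mono) auto
      also have "\<dots> = r" using B by simp
      finally show "norm (ainv x - ainv a) < r" by (simp add: d_def)
    qed
  qed
qed

context unital_cstar_algebra
begin

definition spec :: "'a \<Rightarrow> complex set" where
  "spec x = {\<mu>. \<not> isinv (x - scal \<mu> 1)}"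

lemma scal_mult_both: "scal c x * scal d y = scal (c * d) (x * y)"
  by (metis scal_mult_left scal_mult_right scal_scal)

lemma isinv_scal: "c \<noteq> 0 \<Longrightarrow> isinv y \<Longrightarrow> isinv (scal c y)"
proof -
  assume c: "c \<noteq> 0" and y: "isinv y"
  have "scal c y * scal (1/c) (ainv y) = scal (c * (1/c)) (y * ainv y)"
    by (rule scal_mult_both)
  also have "\<dots> = 1" using c y by (simp add: ainv_right)
  finally have 1: "scal c y * scal (1/c) (ainv y) = 1" .
  have "scal (1/c) (ainv y) * scal c y = scal ((1/c) * c) (ainv y * y)"
    by (rule scal_mult_both)
  also have "\<dots> = 1" using c y by (simp add: ainv_left)
  finally show ?thesis using 1 isinvI by metis
qed

lemma spec_norm: "\<mu> \<in> spec x \<Longrightarrow> cmod \<mu> \<le> norm x"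
proof (rule ccontr)
  assume mu: "\<mu> \<in> spec x" and "\<not> cmod \<mu> \<le> norm x"
  hence lt: "norm x < cmod \<mu>" by simp
  hence nz: "\<mu> \<noteq> 0" by auto
  have n: "norm (scal (1/\<mu>) x) < 1" using lt nz by (simp add: norm_scal norm_divide field_simps)
  have "isinv (scal (- \<mu>) (1 - scal (1/\<mu>) x))"
    using isinv_scal[OF _ neumann[OF n], of "-\<mu>"] nz by simp
  moreover have "scal (- \<mu>) (1 - scal (1/\<mu>) x) = x - scal \<mu> 1"
    using nz by (simp add: scal_diff_right scal_scal scal_minus_left)
  ultimately show False using mu unfolding spec_def by simp
qed

lemma spec_real:
  assumes sa: "star h = h" and mu: "\<mu> \<in> spec h"
  shows "Im \<mu> = 0"
proof (rule ccontr)
  assume b0: "Im \<mu> \<noteq> 0"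
  define a where "a = Re \<mu>"
  define b where "b = Im \<mu>"
  define g where "g = scal (complex_of_real (1/b)) (h - scal (complex_of_real a) 1)"
  have sag: "star g = g" unfolding g_def using sa
    by (simp add: star_scal star_diff)
  have hg: "h - scal \<mu> 1 = scal (complex_of_real b) (g - scal \<i> 1)"
  proof -
    have "scal (complex_of_real b) (g - scal \<i> 1) = (h - scal (complex_of_real a) 1) - scal (complex_of_real b * \<i>) 1"
      unfolding g_def using b0 b_def by (simp add: scal_diff_right scal_scal)
    also have "\<dots> = h - scal (complex_of_real a + complex_of_real b * \<i>) 1"
      by (simp add: scal_add_left)
    also have "complex_of_real a + complex_of_real b * \<i> = \<mu>"
      unfolding a_def b_def by (simp add: complex_eq_iff)
    finally show ?thesis by simp
  qed
  have ni: "\<not> isinv (g - scal \<i> 1)"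
  proof
    assume "isinv (g - scal \<i> 1)"
    hence "isinv (h - scal \<mu> 1)" unfolding hg using b0 b_def by (intro isinv_scal) auto
    thus False using mu unfolding spec_def by simp
  qed
  define t :: real where "t = (norm g)^2 + 1"
  have tpos: "t > 0" unfolding t_def by (simp add: add_nonneg_pos)
  define y where "y = g + scal (\<i> * complex_of_real t) 1"
  have "y - scal (\<i> * complex_of_real (1 + t)) 1 = g - scal \<i> 1"
    unfolding y_def by (simp add: algebra_simps scal_add_left scal_diff_left)
  hence "\<i> * complex_of_real (1 + t) \<in> spec y" using ni unfolding spec_def by simp
  from spec_norm[OF this] have n0: "cmod (\<i> * complex_of_real (1 + t)) \<le> norm y" .
  have "cmod (\<i> * complex_of_real (1 + t)) = 1 + t"
    by (simp only: norm_mult norm_ii norm_of_real) (use tpos in simp)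
  with n0 have n1: "1 + t \<le> norm y" by simp
  have sy: "star y = g - scal (\<i> * complex_of_real t) 1"
    unfolding y_def using sag by (simp add: star_add star_scal scal_minus_left)
  define c where "c = \<i> * complex_of_real t"
  have "(g - scal c 1) * (g + scal c 1) = g * g - scal (c * c) 1"
    by (simp add: algebra_simps scal_one_mult scal_one_mult' scal_mult_both scal_diff_right scal_scal)
  also have "c * c = - complex_of_real (t*t)" unfolding c_def by (simp add: algebra_simps)
  finally have "star y * y = g * g + scal (complex_of_real (t*t)) 1"
    unfolding sy unfolding y_def c_def by (simp add: scal_minus_left)
  hence "(norm y)^2 = norm (g * g + scal (complex_of_real (t*t)) 1)" by (simp add: cstar_identity[symmetric])
  also have "\<dots> \<le> norm (g * g) + t * t"
    using norm_triangle_ineq[of "g*g" "scal (complex_of_real (t*t)) 1"] tpos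
    by (simp add: norm_scal norm_mult)
  also have "\<dots> \<le> (norm g)^2 + t * t" using norm_mult_ineq[of g g] by (simp add: power2_eq_square)
  finally have "(norm y)^2 \<le> (norm g)^2 + t*t" .
  moreover have "(1 + t)^2 \<le> (norm y)^2" using n1 tpos by (intro power_mono) auto
  ultimately have "(1+t)^2 \<le> (norm g)^2 + t * t" by linarith
  thus False unfolding t_def using mult_nonneg_nonneg[OF norm_ge_zero norm_ge_zero, of g g]
    by (simp add: power2_eq_square algebra_simps)
qed

end


definition hb_ok :: "'a::real_normed_vector set \<Rightarrow> ('a \<Rightarrow> real) \<Rightarrow> ('a \<times> real) set \<Rightarrow> bool" where
  "hb_ok D0 f0 G \<longleftrightarrow>
     (\<forall>x y z. (x,y) \<in> G \<longrightarrow> (x,z) \<in> G \<longrightarrow> y = z) \<and>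
     (\<forall>x a y b. (x,a) \<in> G \<longrightarrow> (y,b) \<in> G \<longrightarrow> (x + y, a + b) \<in> G) \<and>
     (\<forall>x a r. (x,a) \<in> G \<longrightarrow> (r *\<^sub>R x, r * a) \<in> G) \<and>
     (\<forall>x a. (x,a) \<in> G \<longrightarrow> a \<le> norm x) \<and>
     (\<forall>x\<in>D0. (x, f0 x) \<in> G)"

lemma hb_okD:
  assumes "hb_ok D0 f0 G"
  shows "\<And>x y z. (x,y) \<in> G \<Longrightarrow> (x,z) \<in> G \<Longrightarrow> y = z"
   and "\<And>x a y b. (x,a) \<in> G \<Longrightarrow> (y,b) \<in> G \<Longrightarrow> (x + y, a + b) \<in> G"
   and "\<And>x a r. (x,a) \<in> G \<Longrightarrow> (r *\<^sub>R x, r * a) \<in> G"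
   and "\<And>x a. (x,a) \<in> G \<Longrightarrow> a \<le> norm x"
   and "\<And>x. x \<in> D0 \<Longrightarrow> (x, f0 x) \<in> G"
  using assms unfolding hb_ok_def by blast+

lemma hb_extend_step:
  fixes M :: "('a::real_normed_vector \<times> real) set"
  assumes ok: "hb_ok D0 f0 M" and z: "(0, 0) \<in> M" and x0: "x0 \<notin> fst ` M"
  shows "\<exists>M'. hb_ok D0 f0 M' \<and> M \<subseteq> M' \<and> M' \<noteq> M"
proof -
  have fn1: "\<And>x y z. (x,y) \<in> M \<Longrightarrow> (x,z) \<in> M \<Longrightarrow> y = z"
   and add: "\<And>x a y b. (x,a) \<in> M \<Longrightarrow> (y,b) \<in> M \<Longrightarrow> (x + y, a + b) \<in> M"
   and scl: "\<And>x a r. (x,a) \<in> M \<Longrightarrow> (r *\<^sub>R x, r * a) \<in> M"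
   and bnd: "\<And>x a. (x,a) \<in> M \<Longrightarrow> a \<le> norm x"
   and ext: "\<And>x. x \<in> D0 \<Longrightarrow> (x, f0 x) \<in> M"
    using hb_okD[OF ok] by blast+
  define L where "L = {a - norm (y - x0) | y a. (y,a) \<in> M}"
  have key: "a - norm (y - x0) \<le> norm (w + x0) - b" if "(y,a) \<in> M" "(w,b) \<in> M" for y a w b
  proof -
    have "a + b \<le> norm (y + w)" using bnd[OF add[OF that]] .
    also have "\<dots> = norm ((y - x0) + (w + x0))" by (simp add: algebra_simps)
    also have "\<dots> \<le> norm (y - x0) + norm (w + x0)" by (rule norm_triangle_ineq)
    finally show ?thesis by simp
  qed
  define c where "c = Sup L"
  have Lne: "L \<noteq> {}" using z unfolding L_def by blast
  have Lbdd: "bdd_above L"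
    unfolding bdd_above_def L_def using key[OF _ z] by auto
  have c1: "a - norm (y - x0) \<le> c" if "(y,a) \<in> M" for y a
    unfolding c_def by (rule cSup_upper[OF _ Lbdd]) (use that L_def in blast)
  have c2: "c \<le> norm (w + x0) - b" if "(w,b) \<in> M" for w b
    unfolding c_def by (rule cSup_least[OF Lne]) (use key that L_def in auto)
  define M' where "M' = {(y + t *\<^sub>R x0, a + t * c) | y a t. (y,a) \<in> M}"
  have dom: "y \<in> fst ` M \<Longrightarrow> r *\<^sub>R y \<in> fst ` M" for y r
    using scl by force
  have domadd: "y \<in> fst ` M \<Longrightarrow> w \<in> fst ` M \<Longrightarrow> y + w \<in> fst ` M" for y w
    using add by force
  have domminus: "y \<in> fst ` M \<Longrightarrow> - y \<in> fst ` M" for y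
    using dom[of y "-1"] by simp
  have uniq: "t = t' \<and> y = y'" if "(y,a) \<in> M" "(y',a') \<in> M" "y + t *\<^sub>R x0 = y' + t' *\<^sub>R x0" for y a y' a' t t'
  proof (cases "t = t'")
    case True thus ?thesis using that by simp
  next
    case False
    have "(t - t') *\<^sub>R x0 = y' - y" using that(3) by (simp add: algebra_simps)
    hence "(1 / (t - t')) *\<^sub>R ((t - t') *\<^sub>R x0) = (1 / (t - t')) *\<^sub>R (y' - y)" by simp
    hence "x0 = (1 / (t - t')) *\<^sub>R (y' - y)" using False by simp
    moreover have "y' - y \<in> fst ` M" using domadd[of y' "-y"] domminus[of y] that by force
    ultimately have "x0 \<in> fst ` M" using dom by simp
    thus ?thesis using x0 by simp
  qed
  have okM': "hb_ok D0 f0 M'"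
    unfolding hb_ok_def
  proof (intro conjI allI impI ballI)
    fix x p q assume "(x, p) \<in> M'" "(x, q) \<in> M'"
    then obtain y a t y' a' t' where 1: "(y,a) \<in> M" "x = y + t *\<^sub>R x0" "p = a + t * c"
      and 2: "(y',a') \<in> M" "x = y' + t' *\<^sub>R x0" "q = a' + t' * c" unfolding M'_def by blast
    have e: "y + t *\<^sub>R x0 = y' + t' *\<^sub>R x0" using 1(2) 2(2) by simp
    from uniq[OF 1(1) 2(1) e] have "t = t'" "y = y'" by auto
    thus "p = q" using fn1 1 2 by auto
  next
    fix x p w q assume "(x, p) \<in> M'" "(w, q) \<in> M'"
    then obtain y a t y' a' t' where 1: "(y,a) \<in> M" "x = y + t *\<^sub>R x0" "p = a + t * c"
      and 2: "(y',a') \<in> M" "w = y' + t' *\<^sub>R x0" "q = a' + t' * c" unfolding M'_def by blast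
    have "(y + y', a + a') \<in> M" using add 1 2 by blast
    moreover have "x + w = (y + y') + (t + t') *\<^sub>R x0" "p + q = (a + a') + (t + t') * c"
      using 1 2 by (simp_all add: algebra_simps)
    ultimately show "(x + w, p + q) \<in> M'" unfolding M'_def by blast
  next
    fix x p r assume "(x, p) \<in> M'"
    then obtain y a t where 1: "(y,a) \<in> M" "x = y + t *\<^sub>R x0" "p = a + t * c" unfolding M'_def by blast
    have "(r *\<^sub>R y, r * a) \<in> M" using scl 1 by blast
    moreover have "r *\<^sub>R x = r *\<^sub>R y + (r * t) *\<^sub>R x0" "r * p = r * a + (r * t) * c"
      using 1 by (simp_all add: algebra_simps)
    ultimately show "(r *\<^sub>R x, r * p) \<in> M'" unfolding M'_def by blast
  next
    fix x p assume "(x, p) \<in> M'"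
    then obtain y a t where 1: "(y,a) \<in> M" "x = y + t *\<^sub>R x0" "p = a + t * c" unfolding M'_def by blast
    show "p \<le> norm x"
    proof (cases t "0::real" rule: linorder_cases)
      case equal thus ?thesis using 1 bnd by simp
    next
      case greater
      have m: "((1/t) *\<^sub>R y, (1/t) * a) \<in> M" using scl 1 by blast
      have "c \<le> norm ((1/t) *\<^sub>R y + x0) - (1/t) * a" using c2[OF m] .
      hence "t * c \<le> t * (norm ((1/t) *\<^sub>R y + x0) - (1/t) * a)" using greater by simp
      also have "\<dots> = t * norm ((1/t) *\<^sub>R y + x0) - a" using greater by (simp add: right_diff_distrib)
      also have "t * norm ((1/t) *\<^sub>R y + x0) = norm (t *\<^sub>R ((1/t) *\<^sub>R y + x0))" using greater by simp
      also have "t *\<^sub>R ((1/t) *\<^sub>R y + x0) = y + t *\<^sub>R x0" using greater by (simp add: scaleR_add_right)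
      finally show ?thesis using 1 by simp
    next
      case less
      define s where "s = - t"
      have s: "s > 0" using less s_def by simp
      have m: "((1/s) *\<^sub>R y, (1/s) * a) \<in> M" using scl 1 by blast
      have "(1/s) * a - norm ((1/s) *\<^sub>R y - x0) \<le> c" using c1[OF m] .
      hence "s * ((1/s) * a - norm ((1/s) *\<^sub>R y - x0)) \<le> s * c" using s by simp
      moreover have "s * ((1/s) * a - norm ((1/s) *\<^sub>R y - x0)) = a - s * norm ((1/s) *\<^sub>R y - x0)"
        using s by (simp add: right_diff_distrib)
      moreover have "s * norm ((1/s) *\<^sub>R y - x0) = norm (s *\<^sub>R ((1/s) *\<^sub>R y - x0))"
        using s by simp
      moreover have "s *\<^sub>R ((1/s) *\<^sub>R y - x0) = y + t *\<^sub>R x0" using s by (simp add: scaleR_diff_right s_def)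
      ultimately have "a - norm (y + t *\<^sub>R x0) \<le> s * c" by simp
      moreover have "s * c = - (t * c)" using s_def by simp
      ultimately show ?thesis using 1 by simp
    qed
  next
    fix x assume "x \<in> D0"
    hence "(x, f0 x) \<in> M" using ext by blast
    hence "(x + 0 *\<^sub>R x0, f0 x + 0 * c) \<in> M'" unfolding M'_def by blast
    thus "(x, f0 x) \<in> M'" by simp
  qed
  have sub: "M \<subseteq> M'"
  proof
    fix p assume "p \<in> M"
    then obtain y a where "p = (y,a)" "(y,a) \<in> M" by (cases p) auto
    hence "(y + 0 *\<^sub>R x0, a + 0 * c) \<in> M'" unfolding M'_def by blast
    thus "p \<in> M'" using \<open>p = (y,a)\<close> by simp
  qed
  have "(0 + 1 *\<^sub>R x0, 0 + 1 * c) \<in> M'" using z unfolding M'_def by blast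
  hence "(x0, c) \<in> M'" by simp
  moreover have "(x0, c) \<notin> M" using x0 by force
  ultimately have "M' \<noteq> M" by blast
  thus ?thesis using okM' sub by blast
qed

theorem real_hahn_banach:
  fixes D0 :: "'a::real_normed_vector set" and f0 :: "'a \<Rightarrow> real"
  assumes D0: "0 \<in> D0" "\<And>x y. x \<in> D0 \<Longrightarrow> y \<in> D0 \<Longrightarrow> x + y \<in> D0" "\<And>x r. x \<in> D0 \<Longrightarrow> r *\<^sub>R x \<in> D0"
    and lin: "\<And>x y. x \<in> D0 \<Longrightarrow> y \<in> D0 \<Longrightarrow> f0 (x + y) = f0 x + f0 y"
      "\<And>x r. x \<in> D0 \<Longrightarrow> f0 (r *\<^sub>R x) = r * f0 x"
    and bd: "\<And>x. x \<in> D0 \<Longrightarrow> f0 x \<le> norm x"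
  shows "\<exists>F. (\<forall>x y. F (x + y) = F x + F y) \<and> (\<forall>r x. F (r *\<^sub>R x) = r * F x) \<and>
             (\<forall>x. F x \<le> norm x) \<and> (\<forall>x\<in>D0. F x = f0 x)"
proof -
  define A where "A = {G. hb_ok D0 f0 G}"
  define G0 where "G0 = {(x, f0 x) | x. x \<in> D0}"
  have G0ok: "hb_ok D0 f0 G0" unfolding hb_ok_def G0_def
  proof (intro conjI allI impI ballI)
    fix x y z assume "(x, y) \<in> {(x, f0 x) |x. x \<in> D0}" "(x, z) \<in> {(x, f0 x) |x. x \<in> D0}"
    thus "y = z" by blast
  next
    fix x a y b assume "(x, a) \<in> {(x, f0 x) |x. x \<in> D0}" "(y, b) \<in> {(x, f0 x) |x. x \<in> D0}"
    hence "x \<in> D0" "y \<in> D0" "a = f0 x" "b = f0 y" by blast+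
    thus "(x + y, a + b) \<in> {(x, f0 x) |x. x \<in> D0}" using D0(2) lin(1) by force
  next
    fix x a r assume "(x, a) \<in> {(x, f0 x) |x. x \<in> D0}"
    hence "x \<in> D0" "a = f0 x" by blast+
    thus "(r *\<^sub>R x, r * a) \<in> {(x, f0 x) |x. x \<in> D0}" using D0(3) lin(2) by force
  next
    fix x a assume "(x, a) \<in> {(x, f0 x) |x. x \<in> D0}"
    hence "x \<in> D0" "a = f0 x" by blast+
    thus "a \<le> norm x" using bd by simp
  next
    fix x assume "x \<in> D0" thus "(x, f0 x) \<in> {(x, f0 x) |x. x \<in> D0}" by blast
  qed
  hence G0: "G0 \<in> A" unfolding A_def by simp
  have "\<forall>C\<in>chains A. \<exists>U\<in>A. \<forall>X\<in>C. X \<subseteq> U"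
  proof
    fix C assume C: "C \<in> chains A"
    show "\<exists>U\<in>A. \<forall>X\<in>C. X \<subseteq> U"
    proof (cases "C = {}")
      case True thus ?thesis using G0 by blast
    next
      case False
      have CA: "\<And>X. X \<in> C \<Longrightarrow> hb_ok D0 f0 X" using chainsD2[OF C] A_def by blast
      have cmp: "\<And>X Y. X \<in> C \<Longrightarrow> Y \<in> C \<Longrightarrow> X \<subseteq> Y \<or> Y \<subseteq> X" using chainsD[OF C] by blast
      have "hb_ok D0 f0 (\<Union>C)"
        unfolding hb_ok_def
      proof (intro conjI allI impI ballI)
        fix x y z assume "(x, y) \<in> \<Union>C" "(x, z) \<in> \<Union>C"
        then obtain X Y where "X \<in> C" "Y \<in> C" "(x,y) \<in> X" "(x,z) \<in> Y" by blast
        thus "y = z" using cmp[of X Y] hb_okD(1)[OF CA[of X]] hb_okD(1)[OF CA[of Y]] by blast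
      next
        fix x a y b assume "(x, a) \<in> \<Union>C" "(y, b) \<in> \<Union>C"
        then obtain X Y where "X \<in> C" "Y \<in> C" "(x,a) \<in> X" "(y,b) \<in> Y" by blast
        thus "(x + y, a + b) \<in> \<Union>C" using cmp[of X Y] hb_okD(2)[OF CA[of X]] hb_okD(2)[OF CA[of Y]] by blast
      next
        fix x a r assume "(x, a) \<in> \<Union>C"
        then obtain X where "X \<in> C" "(x,a) \<in> X" by blast
        thus "(r *\<^sub>R x, r * a) \<in> \<Union>C" using hb_okD(3)[OF CA[of X]] by blast
      next
        fix x a assume "(x, a) \<in> \<Union>C"
        then obtain X where "X \<in> C" "(x,a) \<in> X" by blast
        thus "a \<le> norm x" using hb_okD(4)[OF CA[of X]] by blast
      next
        fix x assume "x \<in> D0"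
        obtain X where "X \<in> C" using False by blast
        thus "(x, f0 x) \<in> \<Union>C" using hb_okD(5)[OF CA[of X]] \<open>x \<in> D0\<close> by blast
      qed
      thus ?thesis unfolding A_def by blast
    qed
  qed
  from Zorn_Lemma2[OF this] obtain M where M: "M \<in> A" and max: "\<forall>X\<in>A. M \<subseteq> X \<longrightarrow> X = M" by blast
  have okM: "hb_ok D0 f0 M" using M A_def by simp
  have z: "(0, 0) \<in> M" using hb_okD(5)[OF okM, of 0] D0(1) lin(2)[of 0 0] by simp
  have full: "x \<in> fst ` M" for x
  proof (rule ccontr)
    assume "x \<notin> fst ` M"
    from hb_extend_step[OF okM z this] obtain M' where "hb_ok D0 f0 M'" "M \<subseteq> M'" "M' \<noteq> M" by blast
    thus False using max A_def by blast
  qed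
  have fn1: "\<And>x y z. (x,y) \<in> M \<Longrightarrow> (x,z) \<in> M \<Longrightarrow> y = z"
   and add: "\<And>x a y b. (x,a) \<in> M \<Longrightarrow> (y,b) \<in> M \<Longrightarrow> (x + y, a + b) \<in> M"
   and scl: "\<And>x a r. (x,a) \<in> M \<Longrightarrow> (r *\<^sub>R x, r * a) \<in> M"
   and bnd: "\<And>x a. (x,a) \<in> M \<Longrightarrow> a \<le> norm x"
   and ext: "\<And>x. x \<in> D0 \<Longrightarrow> (x, f0 x) \<in> M"
    using hb_okD[OF okM] by blast+
  define F where "F x = (THE a. (x,a) \<in> M)" for x
  have Fin: "(x, F x) \<in> M" for x
  proof -
    obtain a where a: "(x,a) \<in> M" using full[of x] by force
    have "F x = a" unfolding F_def
    proof (rule the_equality)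
      show "(x,a) \<in> M" by (rule a)
    next
      fix b assume "(x,b) \<in> M" thus "b = a" using fn1 a by blast
    qed
    thus ?thesis using a by simp
  qed
  have Feq: "(x,a) \<in> M \<Longrightarrow> F x = a" for x a using fn1 Fin by blast
  show ?thesis
  proof (intro exI[of _ F] conjI allI ballI)
    fix x y show "F (x + y) = F x + F y" using Feq[OF add[OF Fin Fin]] .
  next
    fix r x show "F (r *\<^sub>R x) = r * F x" using Feq[OF scl[OF Fin]] .
  next
    fix x show "F x \<le> norm x" using bnd[OF Fin] .
  next
    fix x assume "x \<in> D0" thus "F x = f0 x" using Feq[OF ext] by blast
  qed
qed


context unital_cstar_algebra
begin

lemma scal_decomp: "scal c x = Re c *\<^sub>R x + Im c *\<^sub>R scal \<i> x"
proof -
  have "c = complex_of_real (Re c) + complex_of_real (Im c) * \<i>" by (simp add: complex_eq_iff)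
  hence "scal c x = scal (complex_of_real (Re c)) x + scal (complex_of_real (Im c)) (scal \<i> x)"
    by (metis scal_add_left scal_scal)
  thus ?thesis by (simp add: scal_real)
qed

theorem complex_hahn_banach:
  fixes V :: "'a set" and f :: "'a \<Rightarrow> complex"
  assumes V: "0 \<in> V" "\<And>x y. x \<in> V \<Longrightarrow> y \<in> V \<Longrightarrow> x + y \<in> V" "\<And>c x. x \<in> V \<Longrightarrow> scal c x \<in> V"
    and lin: "\<And>x y. x \<in> V \<Longrightarrow> y \<in> V \<Longrightarrow> f (x + y) = f x + f y"
      "\<And>c x. x \<in> V \<Longrightarrow> f (scal c x) = c * f x"
    and bd: "\<And>x. x \<in> V \<Longrightarrow> cmod (f x) \<le> norm x"
  shows "\<exists>F. clinear_functional scal F \<and> (\<forall>x. cmod (F x) \<le> norm x) \<and> (\<forall>x\<in>V. F x = f x)"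
proof -
  have Vr: "\<And>x r. x \<in> V \<Longrightarrow> r *\<^sub>R x \<in> V" using V(3) by (metis scal_real)
  have l1: "\<And>x y. x \<in> V \<Longrightarrow> y \<in> V \<Longrightarrow> Re (f (x + y)) = Re (f x) + Re (f y)" using lin(1) by simp
  have l2: "\<And>x r. x \<in> V \<Longrightarrow> Re (f (r *\<^sub>R x)) = r * Re (f x)"
  proof -
    fix x r assume x: "x \<in> V"
    have "f (r *\<^sub>R x) = complex_of_real r * f x" using lin(2)[OF x, of "complex_of_real r"] by (simp add: scal_real)
    thus "Re (f (r *\<^sub>R x)) = r * Re (f x)" by simp
  qed
  have b: "\<And>x. x \<in> V \<Longrightarrow> Re (f x) \<le> norm x" using bd complex_Re_le_cmod order_trans by blast
  obtain F0 where F0: "\<forall>x y. F0 (x + y) = F0 x + F0 y" "\<forall>r x. F0 (r *\<^sub>R x) = r * F0 x"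
      "\<forall>x. F0 x \<le> norm x" "\<forall>x\<in>V. F0 x = Re (f x)"
    using real_hahn_banach[of V "\<lambda>x. Re (f x)", OF V(1) V(2) Vr l1 l2 b] by blast
  have F0s: "F0 (scal c x) = Re c * F0 x + Im c * F0 (scal \<i> x)" for c x
    using F0(1,2) scal_decomp[of c x] by simp
  define F where "F x = Complex (F0 x) (- F0 (scal \<i> x))" for x
  have Fadd: "F (x + y) = F x + F y" for x y
    unfolding F_def using F0(1) by (simp add: scal_add_right complex_eq_iff)
  have Fscal: "F (scal c x) = c * F x" for c x
  proof -
    have "F0 (scal \<i> (scal c x)) = F0 (scal (\<i> * c) x)" by (simp add: scal_scal)
    also have "\<dots> = - Im c * F0 x + Re c * F0 (scal \<i> x)" using F0s[of "\<i> * c" x] by simp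
    finally have e: "F0 (scal \<i> (scal c x)) = - Im c * F0 x + Re c * F0 (scal \<i> x)" .
    show ?thesis unfolding F_def using e F0s[of c x] by (simp add: complex_eq_iff algebra_simps)
  qed
  have clin: "clinear_functional scal F" unfolding clinear_functional_def using Fadd Fscal by blast
  have ext: "F x = f x" if x: "x \<in> V" for x
  proof -
    have "F0 (scal \<i> x) = Re (f (scal \<i> x))" using F0(4) V(3)[OF x] by blast
    also have "\<dots> = - Im (f x)" using lin(2)[OF x, of \<i>] by simp
    finally show ?thesis unfolding F_def using F0(4) x by (simp add: complex_eq_iff)
  qed
  have bound: "cmod (F x) \<le> norm x" for x
  proof (cases "F x = 0")
    case False
    define u where "u = cnj (F x) / complex_of_real (cmod (F x))"
    have u1: "cmod u = 1" using False unfolding u_def by (simp add: norm_divide)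
    have cc: "cnj (F x) * F x = complex_of_real ((cmod (F x))^2)" using complex_norm_square[of "F x"] by (simp add: mult.commute)
    have "F (scal u x) = (cnj (F x) * F x) / complex_of_real (cmod (F x))"
      unfolding Fscal u_def by simp
    also have "\<dots> = complex_of_real ((cmod (F x))^2 / cmod (F x))" unfolding cc by simp
    also have "\<dots> = complex_of_real (cmod (F x))" using False by (simp add: power2_eq_square)
    finally have "F (scal u x) = complex_of_real (cmod (F x))" .
    hence "cmod (F x) = Re (F (scal u x))" by simp
    also have "\<dots> = F0 (scal u x)" unfolding F_def by simp
    also have "\<dots> \<le> norm (scal u x)" using F0(3) by blast
    also have "\<dots> = norm x" using u1 by (simp add: norm_scal)
    finally show ?thesis .
  qed simp
  show ?thesis using clin bound ext by blast
qed

lemma spec_scal1: "\<mu> \<in> spec (scal lam 1) \<Longrightarrow> \<mu> = lam"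
proof (rule ccontr)
  assume m: "\<mu> \<in> spec (scal lam 1)" and ne: "\<mu> \<noteq> lam"
  have "isinv (scal (lam - \<mu>) 1)" using ne by (intro isinv_scal) auto
  thus False using m unfolding spec_def by (simp add: scal_diff_left)
qed

lemma norm_scal1[simp]: "norm (scal c 1) = cmod c"
  by (simp add: norm_scal)

lemma scal1_eq_iff: "scal a 1 = scal b 1 \<longleftrightarrow> a = b"
proof
  assume "scal a 1 = scal b 1"
  hence "scal (a - b) 1 = 0" by (simp add: scal_diff_left)
  hence "cmod (a - b) = 0" using norm_scal1[of "a - b"] by simp
  thus "a = b" by simp
qed simp

theorem spec_functional:
  assumes mu: "\<mu> \<in> spec x"
  shows "\<exists>F. clinear_functional scal F \<and> (\<forall>y. cmod (F y) \<le> norm y) \<and> F 1 = 1 \<and> F x = \<mu>"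
proof -
  define V where "V = {scal a 1 + scal b x | a b. True}"
  have wd: "a + b * \<mu> = a' + b' * \<mu>" if e: "scal a 1 + scal b x = scal a' 1 + scal b' x" for a b a' b'
  proof (cases "b = b'")
    case True
    hence "scal a 1 = scal a' 1" using e by simp
    thus ?thesis using True scal1_eq_iff by simp
  next
    case False
    have "scal (b - b') x = scal (a' - a) 1" using e by (simp add: scal_diff_left algebra_simps)
    hence "scal (1 / (b - b')) (scal (b - b') x) = scal (1 / (b - b')) (scal (a' - a) 1)" by simp
    hence xe: "x = scal ((a' - a) / (b - b')) 1" using False by (simp add: scal_scal)
    hence "\<mu> = (a' - a) / (b - b')" using spec_scal1 mu by simp
    thus ?thesis using False by (simp add: field_simps)
  qed
  define f where "f v = (THE c. \<exists>a b. v = scal a 1 + scal b x \<and> c = a + b * \<mu>)" for v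
  have fv: "f (scal a 1 + scal b x) = a + b * \<mu>" for a b
    unfolding f_def
  proof (rule the_equality)
    show "\<exists>a' b'. scal a 1 + scal b x = scal a' 1 + scal b' x \<and> a + b * \<mu> = a' + b' * \<mu>" by blast
  next
    fix c assume "\<exists>a' b'. scal a 1 + scal b x = scal a' 1 + scal b' x \<and> c = a' + b' * \<mu>"
    then obtain a' b' where "scal a 1 + scal b x = scal a' 1 + scal b' x" "c = a' + b' * \<mu>" by blast
    thus "c = a + b * \<mu>" using wd by metis
  qed
  have V0: "0 \<in> V" unfolding V_def by (rule CollectI, rule exI[of _ 0], rule exI[of _ 0]) simp
  have Vadd: "v + w \<in> V" if vw: "v \<in> V" "w \<in> V" for v w
  proof -
    obtain a b a' b' where "v = scal a 1 + scal b x" "w = scal a' 1 + scal b' x" using vw V_def by blast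
    hence "v + w = scal (a + a') 1 + scal (b + b') x" by (simp add: scal_add_left algebra_simps)
    thus ?thesis unfolding V_def by blast
  qed
  have Vscal: "scal c v \<in> V" if vw: "v \<in> V" for c v
  proof -
    obtain a b where "v = scal a 1 + scal b x" using vw V_def by blast
    hence "scal c v = scal (c * a) 1 + scal (c * b) x" by (simp add: scal_add_right scal_scal)
    thus ?thesis unfolding V_def by blast
  qed
  have fadd: "f (v + w) = f v + f w" if vw: "v \<in> V" "w \<in> V" for v w
  proof -
    obtain a b a' b' where ab: "v = scal a 1 + scal b x" "w = scal a' 1 + scal b' x" using vw V_def by blast
    hence "v + w = scal (a + a') 1 + scal (b + b') x" by (simp add: scal_add_left algebra_simps)
    thus ?thesis using ab fv by (simp add: algebra_simps)
  qed
  have fscal: "f (scal c v) = c * f v" if vw: "v \<in> V" for c v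
  proof -
    obtain a b where ab: "v = scal a 1 + scal b x" using vw V_def by blast
    hence "scal c v = scal (c * a) 1 + scal (c * b) x" by (simp add: scal_add_right scal_scal)
    thus ?thesis using ab fv by (simp add: algebra_simps)
  qed
  have fbd: "cmod (f v) \<le> norm v" if vw: "v \<in> V" for v
  proof -
    obtain a b where ab: "v = scal a 1 + scal b x" using vw V_def by blast
    show ?thesis
    proof (cases "b = 0")
      case True
      have "f v = a" using ab fv[of a 0] True by simp
      thus ?thesis using ab True by simp
    next
      case False
      have "v - scal (a + b * \<mu>) 1 = scal b (x - scal \<mu> 1)"
        unfolding ab by (simp add: scal_diff_right scal_add_left scal_scal algebra_simps)
      moreover have "\<not> isinv (scal b (x - scal \<mu> 1))"
      proof
        assume ii: "isinv (scal b (x - scal \<mu> 1))"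
        have "1/b \<noteq> 0" using False by simp
        from isinv_scal[OF this ii] have "isinv (scal (1/b) (scal b (x - scal \<mu> 1)))" .
        thus False using mu False unfolding spec_def by (simp add: scal_scal)
      qed
      ultimately have "a + b * \<mu> \<in> spec v" unfolding spec_def by simp
      thus ?thesis using spec_norm ab fv by simp
    qed
  qed
  obtain F where F: "clinear_functional scal F" "\<forall>y. cmod (F y) \<le> norm y" "\<forall>v\<in>V. F v = f v"
    using complex_hahn_banach[of V f, OF V0 Vadd Vscal fadd fscal fbd] by blast
  have "1 \<in> V" unfolding V_def by (rule CollectI, rule exI[of _ 1], rule exI[of _ 0]) simp
  hence "F 1 = f 1" using F(3) by simp
  also have "f 1 = f (scal 1 1 + scal 0 x)" by simp
  also have "\<dots> = 1" by (simp only: fv) simp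
  finally have F1: "F 1 = 1" .
  have "x \<in> V" unfolding V_def by (rule CollectI, rule exI[of _ 0], rule exI[of _ 1]) simp
  hence "F x = f x" using F(3) by simp
  also have "f x = f (scal 0 1 + scal 1 x)" by simp
  also have "\<dots> = \<mu>" by (simp only: fv) simp
  finally have Fx: "F x = \<mu>" .
  show ?thesis using F F1 Fx by blast
qed

lemma clinear_add: "clinear_functional scal F \<Longrightarrow> F (x + y) = F x + F y"
  unfolding clinear_functional_def by blast
lemma clinear_scal: "clinear_functional scal F \<Longrightarrow> F (scal c x) = c * F x"
  unfolding clinear_functional_def by blast
lemma clinear_zero: "clinear_functional scal F \<Longrightarrow> F 0 = 0"
  using clinear_scal[of F 0 0] by simp
lemma clinear_minus: "clinear_functional scal F \<Longrightarrow> F (- x) = - F x"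
  using clinear_scal[of F "-1" x] by (simp add: scal_minus_left)
lemma clinear_diff: "clinear_functional scal F \<Longrightarrow> F (x - y) = F x - F y"
  using clinear_add[of F x "-y"] clinear_minus[of F y] by simp
lemma clinear_scaleR: "clinear_functional scal F \<Longrightarrow> F (r *\<^sub>R x) = complex_of_real r * F x"
  using clinear_scal[of F "complex_of_real r" x] by (simp add: scal_real)
lemma clinear_sum: "clinear_functional scal F \<Longrightarrow> F (sum g A) = (\<Sum>i\<in>A. F (g i))"
  by (induction A rule: infinite_finite_induct) (auto simp: clinear_zero clinear_add)

lemma norm_sa_plus_it:
  assumes sa: "star h = h"
  shows "(norm (h + scal (\<i> * complex_of_real t) 1))^2 \<le> (norm h)^2 + t * t"
proof -
  define c where "c = \<i> * complex_of_real t"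
  define y where "y = h + scal c 1"
  have sy: "star y = h - scal c 1"
    unfolding y_def c_def using sa by (simp add: star_add star_scal scal_minus_left)
  have "(h - scal c 1) * (h + scal c 1) = h * h - scal (c * c) 1"
    by (simp add: algebra_simps scal_one_mult scal_one_mult' scal_mult_both scal_diff_right scal_scal)
  also have "c * c = - complex_of_real (t*t)" unfolding c_def by (simp add: algebra_simps)
  finally have "star y * y = h * h + scal (complex_of_real (t*t)) 1"
    unfolding sy unfolding y_def by (simp add: scal_minus_left)
  hence "(norm y)^2 = norm (h * h + scal (complex_of_real (t*t)) 1)" by (simp add: cstar_identity[symmetric])
  also have "\<dots> \<le> norm (h * h) + t * t"
    using norm_triangle_ineq[of "h*h" "scal (complex_of_real (t*t)) 1"]
    by (simp add: norm_mult)
  also have "\<dots> \<le> (norm h)^2 + t * t" using norm_mult_ineq[of h h] by (simp add: power2_eq_square)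
  finally show ?thesis unfolding y_def c_def .
qed

lemma contractive_real_on_sa:
  assumes F: "clinear_functional scal F" "\<forall>y. cmod (F y) \<le> norm y" "F 1 = 1"
    and sa: "star h = h"
  shows "Im (F h) = 0"
proof (rule ccontr)
  assume b0: "Im (F h) \<noteq> 0"
  define a where "a = Re (F h)"
  define b where "b = Im (F h)"
  define t where "t = ((norm h)^2 + 1) / (2 * b)"
  have eq: "F (h + scal (\<i> * complex_of_real t) 1) = Complex a (b + t)"
    using F by (simp add: clinear_add clinear_scal a_def b_def complex_eq_iff)
  have "cmod (Complex a (b + t)) \<le> norm (h + scal (\<i> * complex_of_real t) 1)"
    using F(2) eq by metis
  hence "(cmod (Complex a (b + t)))^2 \<le> (norm (h + scal (\<i> * complex_of_real t) 1))^2"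
    by (intro power_mono) auto
  also have "\<dots> \<le> (norm h)^2 + t * t" by (rule norm_sa_plus_it[OF sa])
  finally have "a^2 + (b + t)^2 \<le> (norm h)^2 + t * t" by (simp add: cmod_def)
  hence "2 * b * t \<le> (norm h)^2 - a^2 - b^2" by (simp add: power2_eq_square algebra_simps)
  moreover have "2 * b * t = (norm h)^2 + 1" unfolding t_def using b0 b_def by simp
  ultimately show False by (smt (verit) zero_le_power2)
qed

lemma sa_decomp:
  obtains a b where "star a = a" "star b = b" "x = a + scal \<i> b" "star x = a - scal \<i> b"
proof -
  define a where "a = scal (1/2) (x + star x)"
  define b where "b = scal (- \<i> / 2) (x - star x)"
  have sa: "star a = a" unfolding a_def by (simp add: star_scal star_add star_star add.commute)
  have sb: "star b = b" unfolding b_def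
    by (simp add: star_scal star_diff star_star scal_diff_right scal_minus_left)
  have ib: "scal \<i> b = scal (1/2) (x - star x)" unfolding b_def by (simp add: scal_scal)
  have two: "x + x = scal 2 x" using scal_add_left[of 1 1 x] by simp
  have ex: "x = a + scal \<i> b"
  proof -
    have "a + scal \<i> b = scal (1/2) ((x + star x) + (x - star x))"
      unfolding ib a_def by (simp only: scal_add_right)
    also have "(x + star x) + (x - star x) = scal 2 x" using two by (simp add: algebra_simps)
    finally show ?thesis by (simp add: scal_scal)
  qed
  have esx: "star x = a - scal \<i> b"
  proof -
    have "a - scal \<i> b = scal (1/2) ((x + star x) - (x - star x))"
      unfolding ib a_def by (simp only: scal_diff_right)
    also have "(x + star x) - (x - star x) = scal 2 (star x)" using scal_add_left[of 1 1 "star x"] by (simp add: algebra_simps)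
    finally show ?thesis by (simp add: scal_scal)
  qed
  show ?thesis using that sa sb ex esx by blast
qed

lemma contractive_star:
  assumes F: "clinear_functional scal F" "\<forall>y. cmod (F y) \<le> norm y" "F 1 = 1"
  shows "F (star x) = cnj (F x)"
proof -
  obtain a b where ab: "star a = a" "star b = b" "x = a + scal \<i> b" "star x = a - scal \<i> b"
    by (rule sa_decomp)
  have ra: "Im (F a) = 0" and rb: "Im (F b) = 0" using contractive_real_on_sa[OF F] ab by auto
  show ?thesis unfolding ab(4) unfolding ab(3) using F(1) ra rb
    by (simp add: clinear_add clinear_diff clinear_scal complex_eq_iff)
qed

end


lemma neumann_sums:
  fixes x :: "'a::{real_normed_algebra_1,banach}"
  assumes "norm x < 1"
  shows "(\<lambda>n. x ^ n) sums ainv (1 - x)"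
proof -
  have sn: "summable (\<lambda>n. norm x ^ n)" using assms by (simp add: summable_geometric)
  have s: "summable (\<lambda>n. x ^ n)"
    by (rule summable_comparison_test[OF _ sn]) (auto intro!: exI[of _ 0] norm_power_ineq)
  define s where "s = suminf (\<lambda>n. x ^ n)"
  have z: "(\<lambda>n. x ^ n) \<longlonglongrightarrow> 0"
    using summable_LIMSEQ_zero[OF s] .
  have ps: "(\<lambda>N. \<Sum>n<N. x ^ n) \<longlonglongrightarrow> s" using s unfolding s_def
    by (simp add: summable_LIMSEQ)
  have tel1: "(1 - x) * (\<Sum>n<N. x ^ n) = 1 - x ^ N" for N
  proof (induction N)
    case (Suc N)
    have "(1 - x) * (\<Sum>n<Suc N. x ^ n) = (1 - x) * (\<Sum>n<N. x ^ n) + (1 - x) * x ^ N"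
      by (simp add: distrib_left)
    also have "\<dots> = 1 - x ^ N + (x ^ N - x ^ Suc N)" using Suc by (simp add: left_diff_distrib)
    finally show ?case by simp
  qed simp
  have tel2: "(\<Sum>n<N. x ^ n) * (1 - x) = 1 - x ^ N" for N
  proof -
    have c: "(\<Sum>n<N. x ^ n) * x = x * (\<Sum>n<N. x ^ n)"
      by (simp add: sum_distrib_left sum_distrib_right power_commutes)
    have "(\<Sum>n<N. x ^ n) * (1 - x) = (1 - x) * (\<Sum>n<N. x ^ n)"
      by (simp add: right_diff_distrib left_diff_distrib c)
    thus ?thesis using tel1 by simp
  qed
  have "(\<lambda>N. (1 - x) * (\<Sum>n<N. x ^ n)) \<longlonglongrightarrow> (1 - x) * s"
    by (intro tendsto_mult tendsto_const ps)
  moreover have "(\<lambda>N. (1 - x) * (\<Sum>n<N. x ^ n)) \<longlonglongrightarrow> 1"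
    unfolding tel1 using tendsto_diff[OF tendsto_const[of 1] z] by simp
  ultimately have 1: "(1 - x) * s = 1" using LIMSEQ_unique by blast
  have "(\<lambda>N. (\<Sum>n<N. x ^ n) * (1 - x)) \<longlonglongrightarrow> s * (1 - x)"
    by (intro tendsto_mult tendsto_const ps)
  moreover have "(\<lambda>N. (\<Sum>n<N. x ^ n) * (1 - x)) \<longlonglongrightarrow> 1"
    unfolding tel2 using tendsto_diff[OF tendsto_const[of 1] z] by simp
  ultimately have 2: "s * (1 - x) = 1" using LIMSEQ_unique by blast
  have "ainv (1 - x) = s" using ainv_eq[OF 1 2] .
  thus ?thesis using s unfolding s_def by (simp add: summable_sums)
qed

context unital_cstar_algebra
begin

definition cfun :: "('a \<Rightarrow> complex) \<Rightarrow> bool" where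
  "cfun l \<longleftrightarrow> clinear_functional scal l \<and> (\<forall>y. cmod (l y) \<le> norm y)"

lemma cfun_bounded_linear:
  assumes "cfun l" shows "bounded_linear l"
proof (rule bounded_linear_intro[where K=1])
  show "l (x + y) = l x + l y" for x y using assms clinear_add unfolding cfun_def by blast
  show "l (r *\<^sub>R x) = r *\<^sub>R l x" for r x using assms clinear_scaleR unfolding cfun_def
    by (simp add: scaleR_conv_of_real)
  show "norm (l x) \<le> norm x * 1" for x using assms unfolding cfun_def by simp
qed

lemma norming_functional:
  assumes y: "y \<noteq> 0"
  shows "\<exists>l. cfun l \<and> l y = complex_of_real (norm y)"
proof -
  define V where "V = {scal c y | c. True}"
  have inj: "scal c y = scal c' y \<Longrightarrow> c = c'" for c c'
  proof -
    assume "scal c y = scal c' y"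
    hence "scal (c - c') y = 0" by (simp add: scal_diff_left)
    hence "cmod (c - c') * norm y = 0" using norm_scal[of "c - c'" y] by simp
    thus "c = c'" using y by simp
  qed
  define f where "f v = (THE d. \<exists>c. v = scal c y \<and> d = c * complex_of_real (norm y))" for v
  have fv: "f (scal c y) = c * complex_of_real (norm y)" for c
    unfolding f_def
  proof (rule the_equality)
    show "\<exists>c'. scal c y = scal c' y \<and> c * complex_of_real (norm y) = c' * complex_of_real (norm y)" by blast
  next
    fix d assume "\<exists>c'. scal c y = scal c' y \<and> d = c' * complex_of_real (norm y)"
    then obtain c' where "scal c y = scal c' y" "d = c' * complex_of_real (norm y)" by blast
    thus "d = c * complex_of_real (norm y)" using inj by metis
  qed
  have V0: "0 \<in> V" unfolding V_def by (rule CollectI, rule exI[of _ 0]) simp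
  have Vadd: "v + w \<in> V" if vw: "v \<in> V" "w \<in> V" for v w
  proof -
    obtain c c' where "v = scal c y" "w = scal c' y" using vw V_def by blast
    hence "v + w = scal (c + c') y" by (simp add: scal_add_left)
    thus ?thesis unfolding V_def by blast
  qed
  have Vscal: "scal d v \<in> V" if vw: "v \<in> V" for d v
  proof -
    obtain c where "v = scal c y" using vw V_def by blast
    hence "scal d v = scal (d * c) y" by (simp add: scal_scal)
    thus ?thesis unfolding V_def by blast
  qed
  have fadd: "f (v + w) = f v + f w" if vw: "v \<in> V" "w \<in> V" for v w
  proof -
    obtain c c' where cc: "v = scal c y" "w = scal c' y" using vw V_def by blast
    hence "v + w = scal (c + c') y" by (simp add: scal_add_left)
    thus ?thesis using cc fv by (simp add: algebra_simps)
  qed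
  have fscal: "f (scal d v) = d * f v" if vw: "v \<in> V" for d v
  proof -
    obtain c where cc: "v = scal c y" using vw V_def by blast
    hence "scal d v = scal (d * c) y" by (simp add: scal_scal)
    thus ?thesis using cc fv by (simp add: algebra_simps)
  qed
  have fbd: "cmod (f v) \<le> norm v" if vw: "v \<in> V" for v
  proof -
    obtain c where cc: "v = scal c y" using vw V_def by blast
    thus ?thesis using fv by (simp add: norm_scal norm_mult)
  qed
  obtain F where F: "clinear_functional scal F" "\<forall>y. cmod (F y) \<le> norm y" "\<forall>v\<in>V. F v = f v"
    using complex_hahn_banach[of V f, OF V0 Vadd Vscal fadd fscal fbd] by blast
  have "y \<in> V" unfolding V_def by (rule CollectI, rule exI[of _ 1]) simp
  hence "F y = f y" using F(3) by simp
  also have "f y = f (scal 1 y)" by simp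
  also have "\<dots> = complex_of_real (norm y)" by (simp only: fv) simp
  finally show ?thesis using F unfolding cfun_def by blast
qed

lemma scal_power: "(scal z k) ^ n = scal (z ^ n) (k ^ n)"
proof (induction n)
  case (Suc n) thus ?case by (simp add: scal_mult_both)
qed simp

lemma cont_lin: "continuous (at z) (\<lambda>z. 1 - scal z k)"
proof -
  have e: "(\<lambda>z. 1 - scal z k) = (\<lambda>z. 1 - (Re z *\<^sub>R k + Im z *\<^sub>R scal \<i> k))"
    by (rule ext) (rule arg_cong[where f="\<lambda>t. 1 - t"], rule scal_decomp)
  show ?thesis unfolding e
    by (intro continuous_intros linear_continuous_at[OF bounded_linear_Re] linear_continuous_at[OF bounded_linear_Im])
qed

lemma sa_unit_in_spec:
  assumes sa: "star k = k" and nk: "norm k = 1"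
  shows "\<exists>\<mu>\<in>spec k. cmod \<mu> = 1"
proof (rule ccontr)
  assume no: "\<not> (\<exists>\<mu>\<in>spec k. cmod \<mu> = 1)"
  define L where "L z = 1 - scal z k" for z
  define U where "U = L -` {x. isinv x}"
  have openU: "open U" unfolding U_def L_def by (intro continuous_open_vimage open_isinv cont_lin)
  have inU: "z \<in> U \<longleftrightarrow> isinv (1 - scal z k)" for z unfolding U_def L_def by simp
  have cb: "cball 0 1 \<subseteq> U"
  proof
    fix z :: complex assume "z \<in> cball 0 1"
    hence z1: "cmod z \<le> 1" by simp
    show "z \<in> U"
    proof (cases "z = 0")
      case True thus ?thesis using inU by simp
    next
      case False
      have ge: "cmod (1/z) \<ge> 1" using z1 False by (simp add: norm_divide field_simps)
      have "1/z \<notin> spec k"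
      proof
        assume m: "1/z \<in> spec k"
        hence "cmod (1/z) \<le> 1" using spec_norm nk by fastforce
        hence "cmod (1/z) = 1" using ge by simp
        thus False using no m by blast
      qed
      hence "isinv (k - scal (1/z) 1)" unfolding spec_def by simp
      hence "isinv (scal (- z) (k - scal (1/z) 1))" using False by (intro isinv_scal) auto
      moreover have "scal (- z) (k - scal (1/z) 1) = 1 - scal z k"
        using False by (simp add: scal_diff_right scal_scal scal_minus_left)
      ultimately show ?thesis using inU by simp
    qed
  qed
  obtain e where e: "e > 0" "(\<Union>x\<in>cball 0 1. ball x e) \<subseteq> U"
    using compact_subset_open_imp_ball_epsilon_subset[OF compact_cball openU cb] by blast
  have bU: "ball 0 (1 + e) \<subseteq> U"
  proof
    fix z :: complex assume "z \<in> ball 0 (1 + e)"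
    hence z: "cmod z < 1 + e" by simp
    show "z \<in> U"
    proof (cases "cmod z \<le> 1")
      case True
      hence "z \<in> ball z e" "z \<in> cball 0 1" using e by auto
      thus ?thesis using e by blast
    next
      case False
      define m where "m = cmod z"
      have m1: "m > 1" using False m_def by simp
      define x where "x = (1 / m) *\<^sub>R z"
      have x1: "x \<in> cball 0 1" using m1 unfolding x_def m_def by simp
      have "z - x = (1 - 1 / m) *\<^sub>R z" unfolding x_def by (simp add: algebra_simps)
      hence "norm (z - x) = \<bar>1 - 1 / m\<bar> * m" unfolding m_def by simp
      also have "\<dots> = m - 1" using m1 by (simp add: field_simps)
      finally have "dist x z < e" using z m_def by (simp add: dist_norm norm_minus_commute)
      hence "z \<in> ball x e" by simp
      thus ?thesis using e x1 by blast
    qed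
  qed
  define r where "r = 1 + e / 2"
  have r: "r > 1" "cball 0 r \<subseteq> ball 0 (1 + e)" using e unfolding r_def by auto
  have rU: "cball 0 r \<subseteq> U" using r bU by blast
  define R where "R z = ainv (1 - scal z k)" for z
  have resid: "R z - R w = scal (z - w) (R z * k * R w)" if "z \<in> U" "w \<in> U" for z w
  proof -
    have iz: "isinv (1 - scal z k)" and iw: "isinv (1 - scal w k)" using that inU by auto
    have a: "R z * (1 - scal w k) * R w = R z"
      using ainv_right[OF iw] unfolding R_def by (simp add: mult.assoc)
    have b: "R z * (1 - scal z k) * R w = R w"
      using ainv_left[OF iz] unfolding R_def by simp
    have "R z - R w = R z * ((1 - scal w k) - (1 - scal z k)) * R w"
      using a b by (simp add: algebra_simps)
    also have "(1 - scal w k) - (1 - scal z k) = scal (z - w) k" by (simp add: scal_diff_left)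
    also have "R z * scal (z - w) k * R w = scal (z - w) (R z * k * R w)"
      by (simp add: scal_mult_left[symmetric] scal_mult_right[symmetric])
    finally show ?thesis .
  qed
  have contR: "isCont R w" if "w \<in> U" for w
  proof -
    have "isCont (\<lambda>z. 1 - scal z k) w" using cont_lin by simp
    moreover have "isCont ainv (1 - scal w k)" using that inU isCont_ainv by blast
    ultimately show ?thesis unfolding R_def by (rule isCont_o2)
  qed
  have contRS: "continuous_on (sphere 0 r) R"
    using rU contR by (intro continuous_at_imp_continuous_on) auto
  have "bounded (R ` sphere 0 r)"
    by (intro compact_imp_bounded compact_continuous_image contRS compact_sphere)
  then obtain B where B: "\<And>z. z \<in> sphere 0 r \<Longrightarrow> norm (R z) \<le> B"
    unfolding bounded_iff by blast
  have main: "norm (k ^ n) \<le> B / r ^ n" if kn: "k ^ n \<noteq> 0" for n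
  proof -
    obtain l where l: "cfun l" "l (k ^ n) = complex_of_real (norm (k ^ n))"
      using norming_functional[OF kn] by blast
    have bl: "bounded_linear l" using cfun_bounded_linear[OF l(1)] .
    have lc: "clinear_functional scal l" and lb: "\<And>y. cmod (l y) \<le> norm y"
      using l(1) unfolding cfun_def by auto
    define g where "g z = l (R z)" for z
    have der: "(g has_field_derivative l (R w * k * R w)) (at w)" if w: "w \<in> U" for w
    proof -
      have bl2: "bounded_linear (\<lambda>y. l (y * (k * R w)))"
        using bounded_linear_compose[OF bl bounded_linear_mult_left] by simp
      have "isCont (\<lambda>z. l (R z * (k * R w))) w"
        by (rule isCont_o2[OF contR[OF w]]) (rule linear_continuous_at[OF bl2])
      hence t: "((\<lambda>z. l (R z * k * R w)) \<longlongrightarrow> l (R w * k * R w)) (at w)"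
        unfolding isCont_def by (simp add: mult.assoc)
      have "((\<lambda>z. (g z - g w) / (z - w)) \<longlongrightarrow> l (R w * k * R w)) (at w)"
      proof (rule Lim_transform_within_open[OF t openU w])
        fix z assume z: "z \<in> U" "z \<noteq> w"
        have "g z - g w = l (R z - R w)" unfolding g_def using clinear_diff[OF lc] by simp
        also have "\<dots> = (z - w) * l (R z * k * R w)" unfolding resid[OF z(1) w] using clinear_scal[OF lc] by simp
        finally show "l (R z * k * R w) = (g z - g w) / (z - w)" using z by simp
      qed
      thus ?thesis by (simp add: has_field_derivative_iff)
    qed
    have hol: "g holomorphic_on ball 0 (1 + e)"
      using bU der by (subst holomorphic_on_open) auto
    have contg: "continuous_on (cball 0 r) g"
      using holomorphic_on_imp_continuous_on[OF hol] r(2) continuous_on_subset by blast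
    have holr: "g holomorphic_on ball 0 r"
      using holomorphic_on_subset[OF hol] r(2) ball_subset_cball by blast
    have gB: "norm (g z) \<le> B" if "norm (0 - z) = r" for z
    proof -
      have "z \<in> sphere 0 r" using that by (simp add: dist_norm)
      hence "norm (R z) \<le> B" using B by blast
      thus ?thesis unfolding g_def using lb[of "R z"] by simp
    qed
    have cauchy: "norm ((deriv ^^ n) g 0) \<le> fact n * B / r ^ n"
      using Cauchy_inequality[OF holr contg _ gB] r(1) by simp
    define F where "F = Abs_fps (\<lambda>j. l (k ^ j))"
    have coef: "cmod (l (k ^ j)) \<le> 1" for j
    proof -
      have "cmod (l (k ^ j)) \<le> norm (k ^ j)" by (rule lb)
      also have "\<dots> \<le> norm k ^ j" by (rule norm_power_ineq)
      finally show ?thesis using nk by simp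
    qed
    have sumh: "summable (\<lambda>j. l (k ^ j) * (1/2) ^ j)"
    proof (rule summable_comparison_test[where g="\<lambda>j. (1/2::real) ^ j"])
      show "\<exists>N. \<forall>j\<ge>N. norm (l (k ^ j) * (1/2) ^ j) \<le> (1/2::real) ^ j"
        using coef by (auto simp: norm_mult norm_power intro!: exI[of _ 0] mult_right_le_one_le)
      show "summable (\<lambda>j. (1/2::real) ^ j)" by (simp add: summable_geometric)
    qed
    have "conv_radius (\<lambda>j. l (k ^ j)) \<ge> norm (1/2 :: complex)"
      by (rule conv_radius_geI[OF sumh])
    hence c2: "ereal (1/2) \<le> conv_radius (\<lambda>j. l (k ^ j))" by simp
    have "(0::ereal) < ereal (1/2)" by simp
    from less_le_trans[OF this c2] have "0 < conv_radius (\<lambda>j. l (k ^ j))" .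
    hence rad: "fps_conv_radius F > 0" unfolding F_def fps_conv_radius_def
      by (simp add: fps_nth_Abs_fps)
    have ev: "eventually (\<lambda>z. eval_fps F z = g z) (nhds 0)"
    proof -
      have "eventually (\<lambda>z. z \<in> ball (0::complex) 1) (nhds 0)" by (rule eventually_nhds_in_open) auto
      thus ?thesis
      proof (rule eventually_mono)
      fix z :: complex assume "z \<in> ball 0 1"
      hence z: "norm (scal z k) < 1" using nk by (simp add: norm_scal)
      have "(\<lambda>j. (scal z k) ^ j) sums R z" unfolding R_def by (rule neumann_sums[OF z])
      from bounded_linear.sums[OF bl this] have "(\<lambda>j. l ((scal z k) ^ j)) sums g z" unfolding g_def .
      hence "(\<lambda>j. l (k ^ j) * z ^ j) sums g z"
        using clinear_scal[OF lc] by (simp add: scal_power mult.commute)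
      thus "eval_fps F z = g z" unfolding eval_fps_def F_def by (simp add: sums_iff fps_nth_Abs_fps)
    qed
    qed
    have "g has_fps_expansion F" unfolding has_fps_expansion_def using rad ev by blast
    from fps_nth_fps_expansion[OF this, of n]
    have "l (k ^ n) = (deriv ^^ n) g 0 / fact n" unfolding F_def by simp
    hence "complex_of_real (norm (k ^ n)) = (deriv ^^ n) g 0 / fact n" using l(2) by simp
    hence "cmod (complex_of_real (norm (k ^ n))) = cmod ((deriv ^^ n) g 0 / fact n)" by (rule arg_cong)
    hence "norm (k ^ n) = cmod ((deriv ^^ n) g 0) / fact n" by (simp add: norm_divide)
    also have "\<dots> \<le> (fact n * B / r ^ n) / fact n" by (intro divide_right_mono cauchy) simp
    also have "\<dots> = B / r ^ n" by simp
    finally show ?thesis .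
  qed
  obtain N where N: "B < r ^ N" using real_arch_pow[OF r(1)] by blast
  have k2: "norm (k ^ (2 ^ N)) = 1" using norm_sa_pow2[OF sa, of N] nk by simp
  hence "k ^ (2 ^ N) \<noteq> 0" by auto
  from main[OF this] k2 have "1 \<le> B / r ^ (2 ^ N)" by simp
  hence "r ^ (2 ^ N) \<le> B" using r(1) by (simp add: field_simps)
  moreover have "r ^ N \<le> r ^ (2 ^ N)" using r(1) by (intro power_increasing) (auto intro: less_imp_le[OF less_exp])
  ultimately show False using N by simp
qed

theorem sa_norm_in_spec:
  assumes sa: "star h = h"
  shows "\<exists>\<mu>\<in>spec h. cmod \<mu> = norm h"
proof (cases "h = 0")
  case True
  have "0 \<in> spec h" unfolding spec_def True isinv_def by simp
  thus ?thesis using True by force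
next
  case False
  define N where "N = norm h"
  have N: "N > 0" using False N_def by simp
  define k where "k = scal (complex_of_real (1/N)) h"
  have sak: "star k = k" unfolding k_def using sa by (simp add: star_scal)
  have nk: "norm k = 1" unfolding k_def using N N_def by (simp add: norm_scal norm_divide)
  obtain \<mu> where mu: "\<mu> \<in> spec k" "cmod \<mu> = 1" using sa_unit_in_spec[OF sak nk] by blast
  have "h - scal (complex_of_real N * \<mu>) 1 = scal (complex_of_real N) (k - scal \<mu> 1)"
    unfolding k_def using N by (simp add: scal_diff_right scal_scal)
  moreover have "\<not> isinv (scal (complex_of_real N) (k - scal \<mu> 1))"
  proof
    assume ii: "isinv (scal (complex_of_real N) (k - scal \<mu> 1))"
    have "complex_of_real (1/N) \<noteq> 0" using N by simp
    from isinv_scal[OF this ii] have "isinv (k - scal \<mu> 1)" using N by (simp add: scal_scal)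
    thus False using mu unfolding spec_def by simp
  qed
  ultimately have "complex_of_real N * \<mu> \<in> spec h" unfolding spec_def by simp
  moreover have "cmod (complex_of_real N * \<mu>) = norm h" using mu N N_def by (simp add: norm_mult)
  ultimately show ?thesis by blast
qed

end


lemma isinv_one_minus_swap:
  fixes a b :: "'a::real_normed_algebra_1"
  assumes "isinv (1 - a * b)"
  shows "isinv (1 - b * a)"
proof -
  define u where "u = ainv (1 - a * b)"
  have r: "(1 - a * b) * u = 1" and l: "u * (1 - a * b) = 1"
    using assms ainv_right ainv_left unfolding u_def by auto
  have "(1 - b * a) * (1 + b * u * a) = 1 + b * ((1 - a * b) * u - 1) * a"
    by (simp add: algebra_simps mult.assoc)
  also have "\<dots> = 1" using r by simp
  finally have 1: "(1 - b * a) * (1 + b * u * a) = 1" .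
  have "(1 + b * u * a) * (1 - b * a) = 1 + b * (u * (1 - a * b) - 1) * a"
    by (simp add: algebra_simps mult.assoc)
  also have "\<dots> = 1" using l by simp
  finally have 2: "(1 + b * u * a) * (1 - b * a) = 1" .
  show ?thesis using 1 2 isinvI by metis
qed

context unital_cstar_algebra
begin

definition pos :: "'a \<Rightarrow> bool" where
  "pos h \<longleftrightarrow> star h = h \<and> (\<forall>\<mu>\<in>spec h. Re \<mu> \<ge> 0)"

lemma spec_shift: "\<mu> \<in> spec (x + scal c 1) \<longleftrightarrow> \<mu> - c \<in> spec x"
  unfolding spec_def by (simp add: scal_diff_left algebra_simps)

lemma spec_shift': "\<mu> \<in> spec (scal c 1 - x) \<longleftrightarrow> c - \<mu> \<in> spec x"
proof -
  have "scal (c - \<mu>) 1 = scal c 1 - scal \<mu> 1" by (rule scal_diff_left)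
  hence e: "scal c 1 - x - scal \<mu> 1 = - (x - scal (c - \<mu>) 1)" by (simp add: algebra_simps)
  have i: "isinv (- y) \<longleftrightarrow> isinv y" for y :: 'a using isinv_minus[of y] isinv_minus[of "-y"] by auto
  show ?thesis unfolding spec_def mem_Collect_eq e i ..
qed

lemma spec_real_sa: "star h = h \<Longrightarrow> \<mu> \<in> spec h \<Longrightarrow> \<mu> = complex_of_real (Re \<mu>)"
  using spec_real[of h \<mu>] by (simp add: complex_eq_iff)

lemma sa_norm_le:
  assumes sa: "star h = h" and b: "\<And>\<mu>. \<mu> \<in> spec h \<Longrightarrow> cmod \<mu> \<le> t"
  shows "norm h \<le> t"
  using sa_norm_in_spec[OF sa] b by force

lemma star_scal1_real: "star (scal (complex_of_real t) 1) = scal (complex_of_real t) 1"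
  by (simp add: star_scal)

lemma pos_norm_bound:
  assumes p: "pos h" and t: "norm h \<le> t"
  shows "norm (scal (complex_of_real t) 1 - h) \<le> t"
proof (rule sa_norm_le)
  show "star (scal (complex_of_real t) 1 - h) = scal (complex_of_real t) 1 - h"
    using p unfolding pos_def by (simp add: star_diff star_scal)
next
  fix \<mu> assume "\<mu> \<in> spec (scal (complex_of_real t) 1 - h)"
  hence m: "complex_of_real t - \<mu> \<in> spec h" by (simp add: spec_shift')
  have sa: "star h = h" and ge: "Re (complex_of_real t - \<mu>) \<ge> 0" using p m unfolding pos_def by auto
  have re: "complex_of_real t - \<mu> = complex_of_real (Re (complex_of_real t - \<mu>))"
    using spec_real_sa[OF sa m] .
  have le: "cmod (complex_of_real t - \<mu>) \<le> t" using spec_norm[OF m] t by simp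
  have "Re (complex_of_real t - \<mu>) \<le> t" using le complex_Re_le_cmod order_trans by blast
  hence "\<mu> = complex_of_real (t - Re (complex_of_real t - \<mu>))" using re
    by (simp add: complex_eq_iff)
  moreover have "\<bar>t - Re (complex_of_real t - \<mu>)\<bar> \<le> t" using ge \<open>Re (complex_of_real t - \<mu>) \<le> t\<close>
    by simp
  ultimately show "cmod \<mu> \<le> t" by (metis norm_of_real)
qed

lemma pos_of_norm_bound:
  assumes sa: "star h = h" and t: "norm (scal (complex_of_real t) 1 - h) \<le> t"
  shows "pos h"
  unfolding pos_def
proof (intro conjI ballI sa)
  fix \<mu> assume m: "\<mu> \<in> spec h"
  have "complex_of_real t - \<mu> \<in> spec (scal (complex_of_real t) 1 - h)"
    by (simp add: spec_shift' m)
  hence "cmod (complex_of_real t - \<mu>) \<le> t" using spec_norm t by fastforce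
  hence "Re (complex_of_real t - \<mu>) \<le> t" using complex_Re_le_cmod order_trans by blast
  thus "Re \<mu> \<ge> 0" by simp
qed

lemma pos_sa: "pos h \<Longrightarrow> star h = h" unfolding pos_def by simp

lemma pos_add:
  assumes a: "pos a" and b: "pos b" shows "pos (a + b)"
proof (rule pos_of_norm_bound[where t="norm a + norm b"])
  show "star (a + b) = a + b" using a b by (simp add: star_add pos_def)
  have "scal (complex_of_real (norm a + norm b)) 1 - (a + b)
        = (scal (complex_of_real (norm a)) 1 - a) + (scal (complex_of_real (norm b)) 1 - b)"
    by (simp add: scal_add_left algebra_simps)
  also have "norm \<dots> \<le> norm a + norm b"
    using norm_triangle_ineq[of "scal (complex_of_real (norm a)) 1 - a" "scal (complex_of_real (norm b)) 1 - b"]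
      pos_norm_bound[OF a order_refl] pos_norm_bound[OF b order_refl] by linarith
  finally show "norm (scal (complex_of_real (norm a + norm b)) 1 - (a + b)) \<le> norm a + norm b" .
qed

lemma pos_scaleR:
  assumes p: "pos h" and r: "r \<ge> 0" shows "pos (r *\<^sub>R h)"
proof (rule pos_of_norm_bound[where t="r * norm h"])
  show "star (r *\<^sub>R h) = r *\<^sub>R h" using p by (simp add: star_scaleR pos_def)
  have "scal (complex_of_real (r * norm h)) 1 - r *\<^sub>R h = r *\<^sub>R (scal (complex_of_real (norm h)) 1 - h)"
    by (simp only: scal_real) (simp add: algebra_simps)
  also have "norm \<dots> \<le> r * norm h" using pos_norm_bound[OF p order_refl] r
    by (simp add: mult_left_mono)
  finally show "norm (scal (complex_of_real (r * norm h)) 1 - r *\<^sub>R h) \<le> r * norm h" .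
qed

lemma pos_const: "t \<ge> 0 \<Longrightarrow> pos (scal (complex_of_real t) 1)"
  by (rule pos_of_norm_bound[where t=t]) (simp_all add: star_scal)

lemma pos_zero: "pos 0"
  using pos_const[of 0] by simp

lemma pos_square:
  assumes sa: "star h = h" shows "pos (h * h)"
  unfolding pos_def
proof (intro conjI ballI)
  show "star (h * h) = h * h" using sa by (simp add: star_mult)
next
  fix \<mu> assume m: "\<mu> \<in> spec (h * h)"
  show "Re \<mu> \<ge> 0"
  proof (rule ccontr)
    assume neg: "\<not> Re \<mu> \<ge> 0"
    have sahh: "star (h * h) = h * h" using sa by (simp add: star_mult)
    have mre: "\<mu> = complex_of_real (Re \<mu>)" using spec_real_sa[OF sahh m] .
    define s where "s = sqrt (- Re \<mu>)"
    have s: "s > 0" "s * s = - Re \<mu>" using neg unfolding s_def by auto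
    define c where "c = \<i> * complex_of_real s"
    have "c \<notin> spec h" using spec_real[OF sa, of c] s unfolding c_def by auto
    hence i1: "isinv (h - scal c 1)" unfolding spec_def by simp
    have "- c \<notin> spec h" using spec_real[OF sa, of "- c"] s unfolding c_def by auto
    hence i2: "isinv (h + scal c 1)" unfolding spec_def by (simp add: scal_minus_left)
    have "(h - scal c 1) * (h + scal c 1) = h * h - scal (c * c) 1"
      by (simp add: algebra_simps scal_one_mult scal_one_mult' scal_mult_both scal_diff_right scal_scal)
    also have "c * c = \<mu>" unfolding c_def using s mre by (simp add: complex_eq_iff algebra_simps)
    finally have "isinv (h * h - scal \<mu> 1)" using isinv_mult[OF i1 i2] by simp
    thus False using m unfolding spec_def by simp
  qed
qed

lemma spec_swap:
  assumes m: "\<mu> \<in> spec (x * y)" and nz: "\<mu> \<noteq> 0"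
  shows "\<mu> \<in> spec (y * x)"
proof -
  have eq: "z * w - scal \<mu> 1 = scal (- \<mu>) (1 - scal (1/\<mu>) z * w)" for z w
    using nz by (simp add: scal_diff_right scal_scal scal_minus_left scal_mult_left[symmetric])
  have "\<not> isinv (x * y - scal \<mu> 1)" using m unfolding spec_def by simp
  hence n1: "\<not> isinv (1 - scal (1/\<mu>) x * y)"
    using isinv_scal[of "-\<mu>"] nz eq[of x y] by auto
  have "\<not> isinv (1 - y * scal (1/\<mu>) x)"
    using isinv_one_minus_swap[of y "scal (1/\<mu>) x"] n1 by blast
  moreover have "y * scal (1/\<mu>) x = scal (1/\<mu>) y * x" by (simp add: scal_mult_left[symmetric] scal_mult_right[symmetric])
  ultimately have n2: "\<not> isinv (1 - scal (1/\<mu>) y * x)" by simp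
  have "\<not> isinv (y * x - scal \<mu> 1)"
  proof
    assume "isinv (y * x - scal \<mu> 1)"
    hence "isinv (scal (- 1/\<mu>) (y * x - scal \<mu> 1))" using nz by (intro isinv_scal) auto
    moreover have "scal (- 1/\<mu>) (y * x - scal \<mu> 1) = 1 - scal (1/\<mu>) y * x"
      using nz by (simp add: scal_diff_right scal_scal scal_mult_left[symmetric] scal_minus_left)
    ultimately show False using n2 by simp
  qed
  thus ?thesis unfolding spec_def by simp
qed

end


context unital_cstar_algebra
begin

definition peval :: "complex poly \<Rightarrow> 'a \<Rightarrow> 'a" where
  "peval p a = foldr (\<lambda>c y. scal c 1 + a * y) (coeffs p) 0"

lemma peval_0[simp]: "peval 0 a = 0"
  by (simp add: peval_def)

lemma peval_pCons[simp]: "peval (pCons c p) a = scal c 1 + a * peval p a"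
  by (simp add: peval_def cCons_def)

lemma peval_add: "peval (p + q) a = peval p a + peval q a"
proof (induction p q rule: poly_induct2)
  case (pCons c p d q) thus ?case by (simp add: scal_add_left algebra_simps)
qed simp

lemma peval_smult: "peval (smult c p) a = scal c (peval p a)"
proof (induction p)
  case (pCons d p) thus ?case by (simp add: scal_add_right scal_scal scal_mult_right)
qed simp

lemma peval_mult: "peval (p * q) a = peval p a * peval q a"
proof (induction p)
  case (pCons c p)
  have "peval (pCons c p * q) a = scal c (peval q a) + a * (peval p a * peval q a)"
    using pCons by (simp add: peval_add peval_smult)
  also have "\<dots> = (scal c 1 + a * peval p a) * peval q a"
    by (simp add: distrib_right scal_one_mult mult.assoc)
  finally show ?case by simp
qed simp

lemma peval_const[simp]: "peval [:c:] a = scal c 1"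
  by simp

lemma peval_minus: "peval (- p) a = - peval p a"
  using peval_smult[of "-1" p a] by (simp add: scal_minus_left)

lemma peval_diff: "peval (p - q) a = peval p a - peval q a"
  using peval_add[of p "-q" a] peval_minus[of q a] by simp

lemma peval_lin: "peval [:- z, 1:] a = a - scal z 1"
  by (simp add: scal_minus_left)

lemma peval_one[simp]: "peval 1 a = 1"
  by (metis one_pCons peval_const scal_one)

lemma peval_power: "peval (p ^ n) a = peval p a ^ n"
  by (induction n) (simp_all add: peval_mult)

lemma peval_commute: "a * peval p a = peval p a * a"
proof (induction p)
  case (pCons c p)
  have "a * (scal c 1 + a * peval p a) = scal c a + a * (a * peval p a)"
    by (simp add: distrib_left scal_one_mult')
  also have "\<dots> = scal c a + a * (peval p a * a)" using pCons by simp
  also have "\<dots> = (scal c 1 + a * peval p a) * a"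
    by (simp add: distrib_right scal_one_mult mult.assoc)
  finally show ?case by simp
qed simp

lemma spec_map1:
  assumes t: "t \<in> spec a"
  shows "poly p t \<in> spec (peval p a)"
proof -
  have "poly (p - [:poly p t:]) t = 0" by simp
  then obtain q where q: "p - [:poly p t:] = [:- t, 1:] * q"
    unfolding poly_eq_0_iff_dvd by (auto elim: dvdE)
  have e: "peval p a - scal (poly p t) 1 = (a - scal t 1) * peval q a"
    using arg_cong[OF q, of "\<lambda>r. peval r a"]
    by (simp add: peval_diff peval_mult peval_lin peval_smult left_diff_distrib scal_one_mult)
  have com: "(a - scal t 1) * peval q a = peval q a * (a - scal t 1)"
    using peval_commute[of a q] by (simp add: algebra_simps scal_one_mult scal_one_mult')
  show ?thesis
  proof (rule ccontr)
    assume "poly p t \<notin> spec (peval p a)"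
    hence "isinv (peval p a - scal (poly p t) 1)" unfolding spec_def by simp
    hence "isinv ((a - scal t 1) * peval q a)" using e by simp
    hence "isinv (a - scal t 1)" using isinv_commute_factor[OF com] by simp
    thus False using t unfolding spec_def by simp
  qed
qed

lemma spec_map2_aux:
  assumes ne: "spec a \<noteq> {}"
  shows "(\<forall>t\<in>spec a. poly P t \<noteq> 0) \<Longrightarrow> isinv (peval P a)"
proof (induction "degree P" arbitrary: P rule: less_induct)
  case less
  show ?case
  proof (cases "degree P = 0")
    case True
    then obtain c where P: "P = [:c:]" by (metis degree_eq_zeroE)
    obtain t where "t \<in> spec a" using ne by blast
    hence "c \<noteq> 0" using less.prems P by auto
    thus ?thesis using P by (simp add: isinv_scal)
  next
    case False
    hence "\<not> constant (poly P)" by (simp add: constant_degree)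
    then obtain z where z: "poly P z = 0" using fundamental_theorem_of_algebra by blast
    then obtain Q where Q: "P = [:- z, 1:] * Q" unfolding poly_eq_0_iff_dvd by (auto elim: dvdE)
    have Q0: "Q \<noteq> 0" using Q False by auto
    have "degree ([:- z, 1:] * Q) = degree [:- z, 1:] + degree Q" by (rule degree_mult_eq) (use Q0 in auto)
    hence dQ: "degree Q < degree P" unfolding Q[symmetric] by simp
    have "\<forall>t\<in>spec a. poly Q t \<noteq> 0" using less.prems Q by auto
    hence iQ: "isinv (peval Q a)" using less.hyps[OF dQ] by blast
    have "z \<notin> spec a" using less.prems z by blast
    hence iz: "isinv (a - scal z 1)" unfolding spec_def by simp
    have "peval P a = peval [:- z, 1:] a * peval Q a" unfolding Q by (rule peval_mult)
    hence "peval P a = (a - scal z 1) * peval Q a" by (simp only: peval_lin)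
    thus ?thesis using isinv_mult[OF iz iQ] by simp
  qed
qed

lemma spec_map2:
  assumes ne: "spec a \<noteq> {}" and m: "\<mu> \<in> spec (peval p a)"
  shows "\<exists>t\<in>spec a. poly p t = \<mu>"
proof (rule ccontr)
  assume "\<not> (\<exists>t\<in>spec a. poly p t = \<mu>)"
  hence "\<forall>t\<in>spec a. poly (p - [:\<mu>:]) t \<noteq> 0" by auto
  hence "isinv (peval (p - [:\<mu>:]) a)" by (rule spec_map2_aux[OF ne])
  thus False using m unfolding spec_def by (simp add: peval_diff)
qed

lemma sa_spec_nonempty: "star h = h \<Longrightarrow> spec h \<noteq> {}"
  using sa_norm_in_spec by blast

theorem pos_star_mult: "pos (star x * x)"
proof -
  define a where "a = star x * x"
  have saa: "star a = a" unfolding a_def by (simp add: star_mult star_star)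
  show ?thesis unfolding a_def[symmetric] pos_def
  proof (intro conjI ballI saa)
    fix \<mu>0 assume m0: "\<mu>0 \<in> spec a"
    show "Re \<mu>0 \<ge> 0"
    proof (rule ccontr)
      assume neg: "\<not> Re \<mu>0 \<ge> 0"
      define t0 where "t0 = Re \<mu>0"
      have t0: "t0 < 0" using neg t0_def by simp
      have m0': "complex_of_real t0 \<in> spec a" using spec_real_sa[OF saa m0] m0 t0_def by simp
      define c where "c = norm a"
      have t0c: "- t0 \<le> c" using spec_norm[OF m0'] t0 c_def by simp
      have cpos: "c > 0" using t0c t0 by simp
      define q where "q = c - t0"
      have q: "q > c" using t0 q_def by simp
      have qpos: "q > 0" using q cpos by simp
      have cq: "c / q < 1" "c / q > 0" using q cpos by auto
      have y0: "0 < (- t0) / c" using t0 cpos by (intro divide_pos_pos) auto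
      have x1: "(c / q)^2 < 1" using cq by (simp add: power_less_one_iff)
      obtain N where N: "((c / q)^2) ^ N < (- t0) / c"
        using real_arch_pow_inv[OF y0 x1] by blast
      define \<epsilon> where "\<epsilon> = c * ((c / q)^2) ^ N"
      have eps: "\<epsilon> < - t0" "\<epsilon> \<ge> 0" using N cpos unfolding \<epsilon>_def by (auto simp: field_simps)
      define W where "W = smult (complex_of_real (1 / q ^ N)) ([:complex_of_real c, -1:] ^ N)"
      define P where "P = [:0, 1:] * W * W"
      define w where "w = peval W a"
      have wdef: "w = scal (complex_of_real (1 / q ^ N)) ((scal (complex_of_real c) 1 - a) ^ N)"
        unfolding w_def W_def by (simp add: peval_smult peval_power scal_minus_left)
      have saw: "star w = w" unfolding wdef using saa by (simp add: star_scal star_power star_diff)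
      have pevP: "peval P a = a * w * w" unfolding P_def w_def by (simp add: peval_mult mult.assoc)
      have polyP: "poly P t = t * (complex_of_real (1 / q ^ N) * (complex_of_real c - t) ^ N) ^ 2" for t
        unfolding P_def W_def by (simp add: power2_eq_square)
      define z where "z = x * w"
      have aw: "a * w = w * a" using peval_commute[of a W] unfolding w_def .
      have zz: "star z * z = a * w * w" unfolding z_def a_def
        using saw aw unfolding a_def by (simp add: star_mult mult.assoc)
      define b where "b = star z * z"
      have bP: "b = peval P a" unfolding b_def zz pevP ..
      have sab: "star b = b" unfolding b_def by (simp add: star_mult star_star)
      have t0b: "complex_of_real t0 \<in> spec b"
      proof -
        have "poly P (complex_of_real t0) \<in> spec b" unfolding bP by (rule spec_map1[OF m0'])
        moreover have "poly P (complex_of_real t0) = complex_of_real t0"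
          unfolding polyP q_def using qpos q_def by (simp add: field_simps)
        ultimately show ?thesis by simp
      qed
      have bup: "Re \<mu> \<le> \<epsilon>" if m: "\<mu> \<in> spec b" for \<mu>
      proof -
        obtain t where t: "t \<in> spec a" "poly P t = \<mu>"
          using spec_map2[OF sa_spec_nonempty[OF saa]] m unfolding bP by blast
        define s where "s = Re t"
        have ts: "t = complex_of_real s" using spec_real_sa[OF saa t(1)] s_def by simp
        have sc: "\<bar>s\<bar> \<le> c" using spec_norm[OF t(1)] ts c_def by simp
        have "\<mu> = complex_of_real (s * ((1 / q ^ N) * (c - s) ^ N) ^ 2)"
          using t(2) unfolding polyP ts by simp
        hence re: "Re \<mu> = s * ((1 / q ^ N) * (c - s) ^ N) ^ 2" by simp
        show ?thesis
        proof (cases "s \<le> 0")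
          case True
          hence "s * ((1 / q ^ N) * (c - s) ^ N) ^ 2 \<le> 0" by (simp add: mult_nonpos_nonneg)
          thus ?thesis using re eps by simp
        next
          case False
          have cs: "0 \<le> c - s" "c - s \<le> c" using False sc by auto
          have "((1 / q ^ N) * (c - s) ^ N) ^ 2 = ((c - s) / q) ^ (2 * N)"
            by (simp add: power_mult power_divide power2_eq_square field_simps)
          also have "\<dots> \<le> (c / q) ^ (2 * N)"
            using cs qpos by (intro power_mono divide_right_mono) auto
          also have "\<dots> = ((c / q)^2) ^ N" by (simp add: power_mult)
          finally have le: "((1 / q ^ N) * (c - s) ^ N) ^ 2 \<le> ((c / q)^2) ^ N" .
          have "s * ((1 / q ^ N) * (c - s) ^ N) ^ 2 \<le> c * ((c / q)^2) ^ N"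
            using le sc False by (intro mult_mono) auto
          thus ?thesis using re \<epsilon>_def by simp
        qed
      qed
      have posEb: "pos (scal (complex_of_real \<epsilon>) 1 - b)"
        unfolding pos_def
      proof (intro conjI ballI)
        show "star (scal (complex_of_real \<epsilon>) 1 - b) = scal (complex_of_real \<epsilon>) 1 - b"
          using sab by (simp add: star_diff star_scal)
      next
        fix \<nu> assume "\<nu> \<in> spec (scal (complex_of_real \<epsilon>) 1 - b)"
        hence "complex_of_real \<epsilon> - \<nu> \<in> spec b" by (simp add: spec_shift')
        from bup[OF this] show "Re \<nu> \<ge> 0" by simp
      qed
      define d where "d = z * star z"
      have sad: "star d = d" unfolding d_def by (simp add: star_mult star_star)
      obtain \<alpha> \<beta> where ab: "star \<alpha> = \<alpha>" "star \<beta> = \<beta>" "z = \<alpha> + scal \<i> \<beta>" "star z = \<alpha> - scal \<i> \<beta>"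
        by (rule sa_decomp)
      have "b + d = 2 *\<^sub>R (\<alpha> * \<alpha> + \<beta> * \<beta>)"
      proof -
        have "b + d = (\<alpha> - scal \<i> \<beta>) * (\<alpha> + scal \<i> \<beta>) + (\<alpha> + scal \<i> \<beta>) * (\<alpha> - scal \<i> \<beta>)"
          unfolding b_def d_def using ab(3,4) by simp
        also have "\<dots> = 2 *\<^sub>R (\<alpha> * \<alpha>) - 2 *\<^sub>R (scal \<i> \<beta> * scal \<i> \<beta>)"
          by (simp add: algebra_simps scaleR_2)
        also have "scal \<i> \<beta> * scal \<i> \<beta> = - (\<beta> * \<beta>)"
          using scal_mult_both[of \<i> \<beta> \<i> \<beta>] by (simp add: scal_minus_left)
        finally show ?thesis by (simp add: scaleR_add_right)
      qed
      hence pbd: "pos (b + d)"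
        using pos_scaleR[OF pos_add[OF pos_square[OF ab(1)] pos_square[OF ab(2)]], of 2] by simp
      have "pos ((b + d) + (scal (complex_of_real \<epsilon>) 1 - b))" by (rule pos_add[OF pbd posEb])
      hence pde: "pos (d + scal (complex_of_real \<epsilon>) 1)" by (simp add: algebra_simps)
      have dbound: "cmod \<nu> \<le> \<epsilon>" if nu: "\<nu> \<in> spec d" for \<nu>
      proof -
        have nre: "\<nu> = complex_of_real (Re \<nu>)" using spec_real_sa[OF sad nu] .
        have up: "Re \<nu> \<le> \<epsilon>"
        proof (cases "\<nu> = 0")
          case True thus ?thesis using eps by simp
        next
          case False
          have "\<nu> \<in> spec (star z * z)" using spec_swap[of \<nu> z "star z"] nu False unfolding d_def by simp
          thus ?thesis using bup unfolding b_def by blast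
        qed
        have "\<nu> + complex_of_real \<epsilon> \<in> spec (d + scal (complex_of_real \<epsilon>) 1)"
          using nu by (simp add: spec_shift)
        hence "Re (\<nu> + complex_of_real \<epsilon>) \<ge> 0" using pde unfolding pos_def by blast
        hence lo: "- \<epsilon> \<le> Re \<nu>" by simp
        have "cmod \<nu> = \<bar>Re \<nu>\<bar>" using nre by (metis norm_of_real)
        thus ?thesis using up lo by simp
      qed
      have "norm d \<le> \<epsilon>" by (rule sa_norm_le[OF sad dbound])
      moreover have "norm d = (norm z)^2"
        unfolding d_def using cstar_identity[of "star z"] by (simp add: star_star)
      moreover have "norm b = (norm z)^2" unfolding b_def using cstar_identity[of z] by simp
      ultimately have "norm b \<le> \<epsilon>" by simp
      moreover have "\<bar>t0\<bar> \<le> norm b" using spec_norm[OF t0b] by simp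
      ultimately show False using eps t0 by simp
    qed
  qed
qed

end


lemma half_gchoose_le: "\<bar>(1/2::real) gchoose k\<bar> \<le> 1"
proof (induction k)
  case (Suc k)
  have "(1/2::real) * ((1/2) gchoose k) = of_nat k * ((1/2) gchoose k) + of_nat (Suc k) * ((1/2) gchoose (Suc k))"
    by (rule gbinomial_mult_1)
  hence e: "(1/2::real) gchoose (Suc k) = ((1/2 - of_nat k) / of_nat (Suc k)) * ((1/2) gchoose k)"
    by (simp add: field_simps)
  have "\<bar>(1/2 - of_nat k) / of_nat (Suc k)\<bar> \<le> (1::real)" by (simp add: field_simps)
  hence "\<bar>(1/2::real) gchoose (Suc k)\<bar> \<le> 1 * 1"
    unfolding e abs_mult using Suc by (intro mult_mono) auto
  thus ?case by simp
qed simp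

lemma one_gchoose: "(1::real) gchoose k = (if k = 0 then 1 else if k = 1 then 1 else 0)"
proof -
  have "(1::real) gchoose k = of_nat (1 choose k)" using binomial_gbinomial[of 1 k, where 'a=real] by simp
  thus ?thesis by (cases k) (auto simp: binomial_eq_0)
qed

context unital_cstar_algebra
begin

lemma sqrt_exists:
  assumes sa: "star g = g" and ng: "norm g < 1"
  shows "\<exists>y. star y = y \<and> y * y = 1 - g"
proof -
  define c :: "nat \<Rightarrow> real" where "c k = (-1)^k * ((1/2) gchoose k)" for k
  have cb: "\<bar>c k\<bar> \<le> 1" for k unfolding c_def using half_gchoose_le[of k] by (simp add: abs_mult)
  define a where "a k = c k *\<^sub>R g ^ k" for k
  have na: "norm (a k) \<le> norm g ^ k" for k
  proof -
    have "norm (a k) = \<bar>c k\<bar> * norm (g ^ k)" unfolding a_def by simp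
    also have "\<dots> \<le> 1 * norm g ^ k" using cb[of k] norm_power_ineq[of g k]
      by (intro mult_mono) auto
    finally show ?thesis by simp
  qed
  have sna: "summable (\<lambda>k. norm (a k))"
    by (rule summable_comparison_test[OF _ summable_geometric[of "norm g"]])
       (use na ng in \<open>auto intro!: exI[of _ 0]\<close>)
  have sa': "summable a" using sna summable_norm_cancel by blast
  define y where "y = suminf a"
  have prod: "y * y = (\<Sum>k. \<Sum>i\<le>k. a i * a (k - i))"
    unfolding y_def by (rule Cauchy_product[OF sna sna])
  have inner: "(\<Sum>i\<le>k. a i * a (k - i)) = ((-1)^k * ((1::real) gchoose k)) *\<^sub>R g ^ k" for k
  proof -
    have "(\<Sum>i\<le>k. a i * a (k - i)) = (\<Sum>i\<le>k. (c i * c (k - i)) *\<^sub>R g ^ k)"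
    proof (rule sum.cong[OF refl])
      fix i assume "i \<in> {..k}"
      hence ik: "i \<le> k" by simp
      have "a i * a (k - i) = (c i * c (k - i)) *\<^sub>R (g ^ i * g ^ (k - i))" unfolding a_def by simp
      also have "g ^ i * g ^ (k - i) = g ^ k" using ik by (simp add: power_add[symmetric])
      finally show "a i * a (k - i) = (c i * c (k - i)) *\<^sub>R g ^ k" .
    qed
    also have "\<dots> = (\<Sum>i\<le>k. c i * c (k - i)) *\<^sub>R g ^ k" by (simp add: scaleR_sum_left)
    also have "(\<Sum>i\<le>k. c i * c (k - i)) = (-1)^k * (\<Sum>i\<le>k. ((1/2) gchoose i) * ((1/2) gchoose (k - i)))"
    proof -
      have "(\<Sum>i\<le>k. c i * c (k - i)) = (\<Sum>i\<le>k. (-1)^k * (((1/2) gchoose i) * ((1/2) gchoose (k - i))))"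
      proof (rule sum.cong[OF refl])
        fix i assume "i \<in> {..k}"
        hence "(-1::real)^i * (-1)^(k - i) = (-1)^k" by (simp add: power_add[symmetric])
        thus "c i * c (k - i) = (-1)^k * (((1/2) gchoose i) * ((1/2) gchoose (k - i)))"
          unfolding c_def by (simp add: algebra_simps)
      qed
      thus ?thesis by (simp add: sum_distrib_left)
    qed
    also have "(\<Sum>i\<le>k. ((1/2::real) gchoose i) * ((1/2) gchoose (k - i))) = (1/2 + 1/2) gchoose k"
      using gbinomial_Vandermonde[of "1/2::real" "1/2" k] by (simp add: atLeast0AtMost)
    finally show ?thesis by simp
  qed
  have "(\<lambda>k. ((-1)^k * ((1::real) gchoose k)) *\<^sub>R g ^ k) sums (\<Sum>k\<in>{0,1}. ((-1)^k * ((1::real) gchoose k)) *\<^sub>R g ^ k)"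
    by (rule sums_finite) (auto simp: one_gchoose)
  hence "(\<lambda>k. \<Sum>i\<le>k. a i * a (k - i)) sums (1 - g)" unfolding inner by (simp add: one_gchoose)
  hence yy: "y * y = 1 - g" unfolding prod by (rule sums_unique[symmetric])
  have "star y = (\<Sum>k. star (a k))" unfolding y_def by (rule bounded_linear.suminf[OF bounded_linear_star sa'])
  also have "(\<lambda>k. star (a k)) = a" unfolding a_def using sa by (simp add: star_scaleR star_power)
  finally have "star y = y" unfolding y_def .
  thus ?thesis using yy by blast
qed

lemma state_clinear: "is_state scal star \<phi> \<Longrightarrow> clinear_functional scal \<phi>"
  unfolding is_state_def by blast

lemma state_pos: "is_state scal star \<phi> \<Longrightarrow> Im (\<phi> (star x * x)) = 0 \<and> Re (\<phi> (star x * x)) \<ge> 0"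
  unfolding is_state_def by blast

lemma state_one: "is_state scal star \<phi> \<Longrightarrow> \<phi> 1 = 1"
  unfolding is_state_def by blast

lemma state_star:
  assumes st: "is_state scal star \<phi>"
  shows "\<phi> (star y) = cnj (\<phi> y)"
proof -
  have cl: "clinear_functional scal \<phi>" using state_clinear[OF st] .
  have o: "\<phi> 1 = 1" using state_one[OF st] .
  have ryy: "Im (\<phi> (star y * y)) = 0" using state_pos[OF st] by blast
  have e1: "star (1 + y) * (1 + y) = 1 + y + star y + star y * y"
    by (simp add: star_add algebra_simps)
  have r1: "Im (\<phi> (star (1 + y) * (1 + y))) = 0" using state_pos[OF st] by blast
  hence i1: "Im (\<phi> y) + Im (\<phi> (star y)) = 0" unfolding e1 using cl o ryy by (simp add: clinear_add)
  have s2: "star (1 + scal \<i> y) = 1 - scal \<i> (star y)" by (simp add: star_add star_scal scal_minus_left)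
  have JK: "scal \<i> (star y) * scal \<i> y = - (star y * y)"
    using scal_mult_both[of \<i> "star y" \<i> y] by (simp add: scal_minus_left)
  have e2: "star (1 + scal \<i> y) * (1 + scal \<i> y) = 1 + scal \<i> y - scal \<i> (star y) + star y * y"
    unfolding s2 using JK by (simp add: algebra_simps)
  have r2: "Im (\<phi> (star (1 + scal \<i> y) * (1 + scal \<i> y))) = 0" using state_pos[OF st] by blast
  hence i2: "Re (\<phi> y) - Re (\<phi> (star y)) = 0" unfolding e2 using cl o ryy
    by (simp add: clinear_add clinear_diff clinear_scal)
  show ?thesis using i1 i2 by (simp add: complex_eq_iff)
qed

lemma state_cs:
  assumes st: "is_state scal star \<phi>"
  shows "(cmod (\<phi> x))^2 \<le> Re (\<phi> (star x * x))"
proof -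
  have cl: "clinear_functional scal \<phi>" using state_clinear[OF st] .
  have o: "\<phi> 1 = 1" using state_one[OF st] .
  define \<alpha> where "\<alpha> = \<phi> x"
  define y where "y = x - scal \<alpha> 1"
  have sy: "star y = star x - scal (cnj \<alpha>) 1" unfolding y_def by (simp add: star_diff star_scal)
  have "star y * y = star x * x - star x * scal \<alpha> 1 - scal (cnj \<alpha>) 1 * x + scal (cnj \<alpha>) 1 * scal \<alpha> 1"
    unfolding sy unfolding y_def by (simp add: algebra_simps)
  also have "\<dots> = star x * x - scal \<alpha> (star x) - scal (cnj \<alpha>) x + scal (cnj \<alpha> * \<alpha>) 1"
    by (simp add: scal_one_mult scal_one_mult' scal_mult_both scal_scal mult.commute)
  finally have "star y * y = star x * x - scal \<alpha> (star x) - scal (cnj \<alpha>) x + scal (cnj \<alpha> * \<alpha>) 1" .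
  hence "\<phi> (star y * y) = \<phi> (star x * x) - \<alpha> * cnj \<alpha> - cnj \<alpha> * \<alpha> + cnj \<alpha> * \<alpha>"
    using cl o state_star[OF st, of x] unfolding \<alpha>_def
    by (simp add: clinear_add clinear_diff clinear_scal)
  hence "Re (\<phi> (star y * y)) = Re (\<phi> (star x * x)) - (cmod \<alpha>)^2"
    by (simp add: complex_norm_square[symmetric] mult.commute)
  moreover have "Re (\<phi> (star y * y)) \<ge> 0" using state_pos[OF st] by blast
  ultimately show ?thesis unfolding \<alpha>_def by simp
qed

lemma state_bound_sq:
  assumes st: "is_state scal star \<phi>"
  shows "Re (\<phi> (star x * x)) \<le> (norm x)^2"
proof (rule field_le_epsilon)
  fix \<delta> :: real assume d: "\<delta> > 0"
  have cl: "clinear_functional scal \<phi>" using state_clinear[OF st] .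
  have o: "\<phi> 1 = 1" using state_one[OF st] .
  define T where "T = (norm x)^2 + \<delta>"
  have T: "T > 0" using d unfolding T_def by (simp add: add_nonneg_pos)
  define g where "g = scal (complex_of_real (1 / T)) (star x * x)"
  have sag: "star g = g" unfolding g_def by (simp add: star_scal star_mult star_star)
  have "norm g = norm (star x * x) / T" unfolding g_def using T by (simp add: norm_scal norm_divide)
  also have "\<dots> = (norm x)^2 / T" by (simp add: cstar_identity)
  also have "\<dots> < 1" using T d unfolding T_def by simp
  finally obtain y where y: "star y = y" "y * y = 1 - g" using sqrt_exists[OF sag] by blast
  have "Re (\<phi> (star y * y)) \<ge> 0" using state_pos[OF st] by blast
  hence "Re (\<phi> (1 - g)) \<ge> 0" using y by simp
  hence "Re (\<phi> g) \<le> 1" using cl o by (simp add: clinear_diff)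
  hence "Re (\<phi> (star x * x)) / T \<le> 1" unfolding g_def using cl by (simp add: clinear_scal)
  thus "Re (\<phi> (star x * x)) \<le> (norm x)^2 + \<delta>" using T unfolding T_def by (simp add: field_simps)
qed

theorem state_contractive:
  assumes st: "is_state scal star \<phi>"
  shows "cmod (\<phi> x) \<le> norm x"
proof -
  have "(cmod (\<phi> x))^2 \<le> (norm x)^2" using state_cs[OF st] state_bound_sq[OF st] order_trans by blast
  thus ?thesis by (simp add: power2_le_iff_abs_le)
qed

theorem contractive_state:
  assumes F: "clinear_functional scal F" "\<forall>y. cmod (F y) \<le> norm y" "F 1 = 1"
  shows "is_state scal star F"
  unfolding is_state_def
proof (intro conjI allI F(1) F(3))
  fix x
  have sa: "star (star x * x) = star x * x" by (simp add: star_mult star_star)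
  show "Im (F (star x * x)) = 0" by (rule contractive_real_on_sa[OF F sa])
  define k where "k = star x * x"
  have pk: "pos k" unfolding k_def by (rule pos_star_mult)
  have "norm (scal (complex_of_real (norm k)) 1 - k) \<le> norm k" by (rule pos_norm_bound[OF pk order_refl])
  hence "cmod (F (scal (complex_of_real (norm k)) 1 - k)) \<le> norm k" using F(2) order_trans by blast
  hence "cmod (complex_of_real (norm k) - F k) \<le> norm k" using F by (simp add: clinear_diff clinear_scal)
  hence "Re (complex_of_real (norm k) - F k) \<le> norm k" using complex_Re_le_cmod order_trans by blast
  thus "Re (F (star x * x)) \<ge> 0" unfolding k_def by simp
qed

theorem state_from_spec:
  assumes "\<mu> \<in> spec x"
  shows "\<exists>F. is_state scal star F \<and> F x = \<mu>"
  using spec_functional[OF assms] contractive_state by blast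

theorem state_ucp:
  assumes st: "is_state scal star \<phi>"
  shows "ucp_functional scal star \<phi>"
  unfolding ucp_functional_def
proof (intro conjI allI impI state_clinear[OF st] state_one[OF st])
  fix n and a :: "nat \<Rightarrow> nat \<Rightarrow> 'a"
  assume "pos_matrix_alg star n a"
  then obtain b where b: "\<forall>i<n. \<forall>j<n. a i j = (\<Sum>k<n. star (b k i) * b k j)"
    unfolding pos_matrix_alg_def by blast
  have cl: "clinear_functional scal \<phi>" using state_clinear[OF st] .
  show "psd_complex_matrix n (\<lambda>i j. \<phi> (a i j))"
    unfolding psd_complex_matrix_def Let_def
  proof (intro allI)
    fix v :: "nat \<Rightarrow> complex"
    define y where "y k = (\<Sum>j<n. scal (v j) (b k j))" for k
    have sy: "star (y k) = (\<Sum>i<n. scal (cnj (v i)) (star (b k i)))" for k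
      unfolding y_def by (simp add: star_sum star_scal)
    have yy: "star (y k) * y k = (\<Sum>i<n. \<Sum>j<n. scal (cnj (v i) * v j) (star (b k i) * b k j))" for k
      apply (subst sy)
      apply (simp add: y_def sum_distrib_left sum_distrib_right scal_mult_both)
      apply (rule sum.swap)
      done
    have "(\<Sum>i<n. \<Sum>j<n. cnj (v i) * \<phi> (a i j) * v j)
          = (\<Sum>i<n. \<Sum>j<n. \<Sum>k<n. cnj (v i) * v j * \<phi> (star (b k i) * b k j))"
    proof (intro sum.cong refl)
      fix i j assume ij: "i \<in> {..<n}" "j \<in> {..<n}"
      have "\<phi> (a i j) = (\<Sum>k<n. \<phi> (star (b k i) * b k j))" using b ij cl by (simp add: clinear_sum)
      hence "cnj (v i) * \<phi> (a i j) * v j = (\<Sum>k<n. cnj (v i) * \<phi> (star (b k i) * b k j) * v j)"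
        by (simp add: sum_distrib_left sum_distrib_right)
      also have "\<dots> = (\<Sum>k<n. cnj (v i) * v j * \<phi> (star (b k i) * b k j))"
        by (rule sum.cong[OF refl]) (simp only: mult.assoc mult.commute[of "\<phi> _" "v j"])
      finally show "cnj (v i) * \<phi> (a i j) * v j = (\<Sum>k<n. cnj (v i) * v j * \<phi> (star (b k i) * b k j))" .
    qed
    also have "\<dots> = (\<Sum>i<n. \<Sum>k<n. \<Sum>j<n. cnj (v i) * v j * \<phi> (star (b k i) * b k j))"
      by (rule sum.cong[OF refl], rule sum.swap)
    also have "\<dots> = (\<Sum>k<n. \<Sum>i<n. \<Sum>j<n. cnj (v i) * v j * \<phi> (star (b k i) * b k j))"
      by (rule sum.swap)
    also have "\<dots> = (\<Sum>k<n. \<phi> (star (y k) * y k))"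
      unfolding yy using cl by (simp add: clinear_sum clinear_scal)
    finally have e: "(\<Sum>i<n. \<Sum>j<n. cnj (v i) * \<phi> (a i j) * v j) = (\<Sum>k<n. \<phi> (star (y k) * y k))" .
    have "Im (\<Sum>k<n. \<phi> (star (y k) * y k)) = 0" using state_pos[OF st] by (simp add: Im_sum)
    moreover have "Re (\<Sum>k<n. \<phi> (star (y k) * y k)) \<ge> 0" using state_pos[OF st]
      by (simp add: Re_sum sum_nonneg)
    ultimately show "Im (\<Sum>i<n. \<Sum>j<n. cnj (v i) * \<phi> (a i j) * v j) = 0 \<and>
                     0 \<le> Re (\<Sum>i<n. \<Sum>j<n. cnj (v i) * \<phi> (a i j) * v j)" unfolding e by simp
  qed
qed

lemma ucp_state:
  assumes u: "ucp_functional scal star \<phi>"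
  shows "is_state scal star \<phi>"
  unfolding is_state_def
proof (intro conjI allI)
  show "clinear_functional scal \<phi>" "\<phi> 1 = 1" using u unfolding ucp_functional_def by auto
  fix x
  have "pos_matrix_alg star 1 (\<lambda>i j. star x * x)"
    unfolding pos_matrix_alg_def by (rule exI[of _ "\<lambda>k i. x"]) simp
  hence "psd_complex_matrix 1 (\<lambda>i j. \<phi> (star x * x))" using u unfolding ucp_functional_def by blast
  hence "Im (\<phi> (star x * x)) = 0 \<and> 0 \<le> Re (\<phi> (star x * x))"
    unfolding psd_complex_matrix_def Let_def by (drule_tac x="\<lambda>_. 1" in spec) simp
  thus "Im (\<phi> (star x * x)) = 0" "Re (\<phi> (star x * x)) \<ge> 0" by auto
qed

end


context unital_cstar_algebra
begin

lemma os_facts: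
  assumes OS: "operator_system scal star S"
  shows "0 \<in> S" "1 \<in> S" "\<And>x y. x \<in> S \<Longrightarrow> y \<in> S \<Longrightarrow> x + y \<in> S"
    "\<And>c x. x \<in> S \<Longrightarrow> scal c x \<in> S" "\<And>x. x \<in> S \<Longrightarrow> star x \<in> S"
  using OS unfolding operator_system_def by auto

lemma restrict_state_Q:
  assumes OS: "operator_system scal star S" and st: "is_state scal star \<phi>"
  shows "restrict_fun S \<phi> \<in> sa_unit_ball_dual scal star S"
proof -
  note os = os_facts[OF OS]
  have cl: "clinear_functional scal \<phi>" using state_clinear[OF st] .
  show ?thesis
    unfolding sa_unit_ball_dual_def restrict_fun_def
    using os cl state_star[OF st] state_contractive[OF st]
    by (auto simp: clinear_add clinear_scal)
qed

lemma Q_neg: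
  assumes "\<Lambda> \<in> sa_unit_ball_dual scal star S"
  shows "(\<lambda>x. - \<Lambda> x) \<in> sa_unit_ball_dual scal star S"
  using assms unfolding sa_unit_ball_dual_def by (auto simp: algebra_simps)

lemma Q_sa_real:
  assumes "\<Lambda> \<in> sa_unit_ball_dual scal star S" "s \<in> S" "star s = s"
  shows "\<Lambda> s = complex_of_real (Re (\<Lambda> s))"
proof -
  have "\<Lambda> (star s) = cnj (\<Lambda> s)" using assms unfolding sa_unit_ball_dual_def by blast
  hence "\<Lambda> s = cnj (\<Lambda> s)" using assms by simp
  thus ?thesis by (simp add: complex_eq_iff)
qed

lemma forward:
  assumes OS: "operator_system scal star S" and st: "is_state scal star \<psi>"
    and pk: "S_peaking scal star S \<psi>"
  shows "unique_extension_property scal star S \<psi> \<and>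
         weak_star_exposed S (sa_unit_ball_dual scal star S) (restrict_fun S \<psi>)"
proof -
  note os = os_facts[OF OS]
  obtain s where s: "s \<in> S" "star s = s" "norm s = 1" "\<psi> s = 1"
    and peak: "\<And>\<phi>. is_state scal star \<phi> \<Longrightarrow> \<phi> \<noteq> \<psi> \<Longrightarrow> cmod (\<phi> s) < 1"
    using pk unfolding S_peaking_def by blast
  have uep: "unique_extension_property scal star S \<psi>"
    unfolding unique_extension_property_def
  proof (intro allI impI)
    fix \<phi> assume a: "ucp_functional scal star \<phi> \<and> (\<forall>s\<in>S. \<phi> s = \<psi> s)"
    hence "is_state scal star \<phi>" using ucp_state by blast
    moreover have "\<phi> s = 1" using a s by simp
    ultimately show "\<phi> = \<psi>" using peak by fastforce
  qed
  define Q where "Q = sa_unit_ball_dual scal star S"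
  define \<Lambda>0 where "\<Lambda>0 = restrict_fun S \<psi>"
  have L0Q: "\<Lambda>0 \<in> Q" unfolding Q_def \<Lambda>0_def by (rule restrict_state_Q[OF OS st])
  have L0nz: "\<Lambda>0 \<noteq> (\<lambda>_. 0)"
  proof
    assume "\<Lambda>0 = (\<lambda>_. 0)"
    hence "\<Lambda>0 1 = 0" by simp
    thus False unfolding \<Lambda>0_def restrict_fun_def using os(2) state_one[OF st] by simp
  qed
  have L0s: "Re (\<Lambda>0 s) = 1" unfolding \<Lambda>0_def restrict_fun_def using s by simp
  have m1: "complex_of_real (-1) \<notin> spec s"
  proof
    assume "complex_of_real (-1) \<in> spec s"
    then obtain F where F: "is_state scal star F" "F s = complex_of_real (-1)" using state_from_spec by blast
    have "F \<noteq> \<psi>" using F(2) s(4) by auto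
    from peak[OF F(1) this] F(2) show False by simp
  qed
  hence inv1: "isinv (s - scal (complex_of_real (-1)) 1)" unfolding spec_def by simp
  obtain e where e: "e > 0" "ball (s - scal (complex_of_real (-1)) 1) e \<subseteq> {x. isinv x}"
    using open_isinv inv1 by (metis mem_Collect_eq open_contains_ball)
  define \<delta> where "\<delta> = min (e/2) (1/2)"
  have dl: "\<delta> > 0" "\<delta> \<le> e/2" "\<delta> \<le> 1/2" using e unfolding \<delta>_def by auto
  have nsd: "norm (s - scal (complex_of_real \<delta>) 1) \<le> 1 - \<delta>"
  proof (rule sa_norm_le)
    show "star (s - scal (complex_of_real \<delta>) 1) = s - scal (complex_of_real \<delta>) 1"
      using s by (simp add: star_diff star_scal)
  next
    fix \<mu> assume m: "\<mu> \<in> spec (s - scal (complex_of_real \<delta>) 1)"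
    have eqs: "s - scal (complex_of_real \<delta>) 1 = s + scal (complex_of_real (- \<delta>)) 1" by (simp add: scal_minus_left)
    have "\<mu> \<in> spec (s + scal (complex_of_real (- \<delta>)) 1)" using m eqs by metis
    hence "\<mu> - complex_of_real (- \<delta>) \<in> spec s" by (simp only: spec_shift)
    hence ml: "\<mu> + complex_of_real \<delta> \<in> spec s" by simp
    define l where "l = Re (\<mu> + complex_of_real \<delta>)"
    have lre: "\<mu> + complex_of_real \<delta> = complex_of_real l" using spec_real_sa[OF s(2) ml] l_def by simp
    have lb: "\<bar>l\<bar> \<le> 1" using spec_norm[OF ml] lre s(3) by simp
    have lge: "l \<ge> -1 + e"
    proof (rule ccontr)
      assume "\<not> l \<ge> -1 + e"
      hence lt: "l + 1 < e" "l + 1 \<ge> 0" using lb by auto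
      have "dist (s - scal (complex_of_real l) 1) (s - scal (complex_of_real (-1)) 1) = \<bar>l + 1\<bar>"
      proof -
        have e1: "- 1 - complex_of_real l = complex_of_real (- (l + 1))" by simp
        have "cmod (- 1 - complex_of_real l) = \<bar>l + 1\<bar>" unfolding e1 norm_of_real by simp
        thus ?thesis by (simp add: dist_norm scal_diff_left[symmetric] norm_scal)
      qed
      hence "s - scal (complex_of_real l) 1 \<in> ball (s - scal (complex_of_real (-1)) 1) e"
        using lt by (simp add: dist_commute)
      hence "isinv (s - scal (complex_of_real l) 1)" using e by blast
      thus False using ml lre unfolding spec_def by simp
    qed
    have "\<mu> = complex_of_real (l - \<delta>)" using lre by (simp add: algebra_simps)
    moreover have "\<bar>l - \<delta>\<bar> \<le> 1 - \<delta>" using lge lb dl by auto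
    ultimately show "cmod \<mu> \<le> 1 - \<delta>" by (metis norm_of_real)
  qed
  have exp: "\<forall>\<Lambda>\<in>Q. \<Lambda> \<noteq> \<Lambda>0 \<longrightarrow> Re (\<Lambda> s) < 1"
  proof (intro ballI impI)
    fix \<Lambda> assume LQ: "\<Lambda> \<in> Q" and ne: "\<Lambda> \<noteq> \<Lambda>0"
    have Lp: "\<And>x. x \<notin> S \<Longrightarrow> \<Lambda> x = 0" "\<And>x y. x \<in> S \<Longrightarrow> y \<in> S \<Longrightarrow> \<Lambda> (x + y) = \<Lambda> x + \<Lambda> y"
      "\<And>c x. x \<in> S \<Longrightarrow> \<Lambda> (scal c x) = c * \<Lambda> x" "\<And>x. x \<in> S \<Longrightarrow> cmod (\<Lambda> x) \<le> norm x"
      using LQ unfolding Q_def sa_unit_ball_dual_def by auto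
    show "Re (\<Lambda> s) < 1"
    proof (rule ccontr)
      assume "\<not> Re (\<Lambda> s) < 1"
      hence ge: "Re (\<Lambda> s) \<ge> 1" by simp
      have Lre: "\<Lambda> s = complex_of_real (Re (\<Lambda> s))" using Q_sa_real[of \<Lambda> S s] LQ s unfolding Q_def by simp
      have "cmod (\<Lambda> s) \<le> 1" using Lp(4)[OF s(1)] s(3) by simp
      hence "Re (\<Lambda> s) \<le> 1" using complex_Re_le_cmod order_trans by blast
      hence Ls: "\<Lambda> s = 1" using ge Lre by (simp add: complex_eq_iff)
      obtain F where F: "clinear_functional scal F" "\<forall>x. cmod (F x) \<le> norm x" "\<forall>x\<in>S. F x = \<Lambda> x"
        using complex_hahn_banach[of S \<Lambda>, OF os(1) os(3) os(4) Lp(2) Lp(3) Lp(4)] by blast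
      have Fs: "F s = 1" using F(3) s(1) Ls by simp
      have "cmod (F (s - scal (complex_of_real \<delta>) 1)) \<le> 1 - \<delta>" using F(2) nsd order_trans by blast
      hence c1: "cmod (1 - complex_of_real \<delta> * F 1) \<le> 1 - \<delta>" using F(1) Fs by (simp add: clinear_diff clinear_scal)
      have "Re (1 - complex_of_real \<delta> * F 1) \<le> 1 - \<delta>" using c1 complex_Re_le_cmod order_trans by blast
      hence reF: "Re (F 1) \<ge> 1" using dl by simp
      have f1: "cmod (F 1) \<le> 1" using F(2) by (metis norm_one)
      hence "(Re (F 1))^2 + (Im (F 1))^2 \<le> 1" unfolding cmod_def by (simp add: real_sqrt_le_1_iff)
      moreover have "(Re (F 1))^2 \<ge> 1" using reF by (metis one_le_power)
      ultimately have "(Im (F 1))^2 \<le> 0" by linarith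
      hence "Im (F 1) = 0" by simp
      moreover have "Re (F 1) \<le> 1" using f1 complex_Re_le_cmod order_trans by blast
      ultimately have F1: "F 1 = 1" using reF by (simp add: complex_eq_iff)
      have Fst: "is_state scal star F" by (rule contractive_state[OF F(1) F(2) F1])
      have "F = \<psi>"
      proof (rule ccontr)
        assume "F \<noteq> \<psi>"
        from peak[OF Fst this] Fs show False by simp
      qed
      have "\<Lambda> = \<Lambda>0"
      proof
        fix x show "\<Lambda> x = \<Lambda>0 x"
        proof (cases "x \<in> S")
          case True thus ?thesis using F(3) \<open>F = \<psi>\<close> unfolding \<Lambda>0_def restrict_fun_def by simp
        next
          case False thus ?thesis using Lp(1) unfolding \<Lambda>0_def restrict_fun_def by simp
        qed
      qed
      thus False using ne by simp
    qed
  qed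
  have "weak_star_exposed S Q \<Lambda>0"
    unfolding weak_star_exposed_def using L0Q L0nz L0s s(1) exp by blast
  thus ?thesis using uep unfolding Q_def \<Lambda>0_def by simp
qed

lemma backward:
  assumes OS: "operator_system scal star S" and st: "is_state scal star \<psi>"
    and uep: "unique_extension_property scal star S \<psi>"
    and ex: "weak_star_exposed S (sa_unit_ball_dual scal star S) (restrict_fun S \<psi>)"
  shows "S_peaking scal star S \<psi>"
proof -
  note os = os_facts[OF OS]
  define Q where "Q = sa_unit_ball_dual scal star S"
  define \<Lambda>0 where "\<Lambda>0 = restrict_fun S \<psi>"
  obtain x0 where x0: "x0 \<in> S" "Re (\<Lambda>0 x0) = 1" and exq: "\<forall>\<Lambda>\<in>Q. \<Lambda> \<noteq> \<Lambda>0 \<longrightarrow> Re (\<Lambda> x0) < 1"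
    using ex unfolding weak_star_exposed_def Q_def \<Lambda>0_def by blast
  define s where "s = scal (1/2) (x0 + star x0)"
  have sS: "s \<in> S" unfolding s_def using os x0 by blast
  have sas: "star s = s" unfolding s_def by (simp add: star_scal star_add star_star add.commute)
  have Ls: "\<Lambda> s = complex_of_real (Re (\<Lambda> x0))" if LQ: "\<Lambda> \<in> Q" for \<Lambda>
  proof -
    have Lp: "\<And>x y. x \<in> S \<Longrightarrow> y \<in> S \<Longrightarrow> \<Lambda> (x + y) = \<Lambda> x + \<Lambda> y"
      "\<And>c x. x \<in> S \<Longrightarrow> \<Lambda> (scal c x) = c * \<Lambda> x" "\<And>x. x \<in> S \<Longrightarrow> \<Lambda> (star x) = cnj (\<Lambda> x)"
      using LQ unfolding Q_def sa_unit_ball_dual_def by auto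
    have "\<Lambda> s = (1/2) * (\<Lambda> x0 + cnj (\<Lambda> x0))"
      unfolding s_def using x0(1) os Lp by simp
    thus ?thesis by (simp add: complex_eq_iff)
  qed
  have RQ: "restrict_fun S \<phi> \<in> Q" if "is_state scal star \<phi>" for \<phi>
    unfolding Q_def by (rule restrict_state_Q[OF OS that])
  have Rs: "restrict_fun S \<phi> s = \<phi> s" "restrict_fun S \<phi> x0 = \<phi> x0" for \<phi>
    unfolding restrict_fun_def using sS x0(1) by auto
  have psis: "\<psi> s = 1" using Ls[OF RQ[OF st]] Rs x0(2) unfolding \<Lambda>0_def by simp
  have small: "cmod (\<phi> s) < 1" if sp: "is_state scal star \<phi>" and ne: "\<phi> \<noteq> \<psi>" for \<phi>
  proof -
    have R1: "restrict_fun S \<phi> \<noteq> \<Lambda>0"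
    proof
      assume eq: "restrict_fun S \<phi> = \<Lambda>0"
      have "\<forall>x\<in>S. \<phi> x = \<psi> x"
      proof
        fix x assume "x \<in> S"
        thus "\<phi> x = \<psi> x" using fun_cong[OF eq, of x] unfolding \<Lambda>0_def restrict_fun_def by simp
      qed
      hence "\<phi> = \<psi>" using uep state_ucp[OF sp] unfolding unique_extension_property_def by blast
      thus False using ne by simp
    qed
    have a: "Re (\<phi> x0) < 1" using exq RQ[OF sp] R1 Rs by fastforce
    have R2: "(\<lambda>x. - restrict_fun S \<phi> x) \<noteq> \<Lambda>0"
    proof
      assume "(\<lambda>x. - restrict_fun S \<phi> x) = \<Lambda>0"
      hence "- restrict_fun S \<phi> 1 = \<Lambda>0 1" by metis
      thus False unfolding \<Lambda>0_def restrict_fun_def using os(2) state_one[OF sp] state_one[OF st] by simp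
    qed
    have "(\<lambda>x. - restrict_fun S \<phi> x) \<in> Q" using Q_neg RQ[OF sp] unfolding Q_def by blast
    hence b: "Re (- \<phi> x0) < 1" using exq R2 Rs by fastforce
    have "\<phi> s = complex_of_real (Re (\<phi> x0))" using Ls[OF RQ[OF sp]] Rs by simp
    thus ?thesis using a b by simp
  qed
  have ns: "norm s = 1"
  proof (rule antisym)
    obtain \<mu> where mu: "\<mu> \<in> spec s" "cmod \<mu> = norm s" using sa_norm_in_spec[OF sas] by blast
    obtain F where F: "is_state scal star F" "F s = \<mu>" using state_from_spec[OF mu(1)] by blast
    show "norm s \<le> 1"
    proof (cases "F = \<psi>")
      case True thus ?thesis using F psis mu by simp
    next
      case False thus ?thesis using small[OF F(1) False] F mu by simp
    qed
  next
    show "1 \<le> norm s" using state_contractive[OF st, of s] psis by simp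
  qed
  show ?thesis unfolding S_peaking_def using sS sas ns psis small by blast
qed

theorem main:
  assumes "operator_system scal star S" and "is_state scal star \<psi>"
  shows "S_peaking scal star S \<psi> \<longleftrightarrow>
         (unique_extension_property scal star S \<psi> \<and>
          weak_star_exposed S (sa_unit_ball_dual scal star S) (restrict_fun S \<psi>))"
  using forward[OF assms] backward[OF assms] by blast

end

theorem theorem3p2:
  fixes scal :: "complex \<Rightarrow> 'a::{real_normed_algebra_1, banach} \<Rightarrow> 'a"
    and star :: "'a \<Rightarrow> 'a"
    and S :: "'a set"
    and \<psi> :: "'a \<Rightarrow> complex"
  assumes "unital_cstar_algebra scal star"
    and "operator_system scal star S"
    and "is_state scal star \<psi>"
  shows "S_peaking scal star S \<psi> \<longleftrightarrow>
         (unique_extension_property scal star S \<psi> \<and>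
          weak_star_exposed S (sa_unit_ball_dual scal star S) (restrict_fun S \<psi>))"
  using unital_cstar_algebra.main[OF assms(1) assms(2) assms(3)] .


end
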